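(* Let $\mathbb G$ be a Carnot group and $j\in\{1,\dots,n_1\}$. (1) For every $s\in\mathbb R$ the maps $\Pi_{s,j}\to\Pi_j$ given by $x\mapsto\exp(-sX_j)x$, $x\mapsto x\exp(-sX_j)$ and $x\mapsto\mathrm{Pr}_j(x)$ are diffeomorphisms of $\Pi_{s,j}$ onto $\Pi_j$ with Jacobian $1$. (2) The Jacobi matrix of $\mathrm{Pr}_j:\mathbb G\to\Pi_j$ in the basis $X_j,X_1,\dots,X_{j-1},X_{j+1},\dots,X_N$ (i.e. with $x_j$ as the first coordinate) has the form $D\mathrm{Pr}_j(x)=\begin{pmatrix}0&T_j(x)\end{pmatrix}$ where $\det T_j(x)=1$.
   Context: $\mathbb{G}$ is a Carnot group: Lie algebra $\mathfrak{g}=V_1\oplus\dots\oplus V_m$ of left-invariant vector fields with $[V_1,V_k]=V_{k+1}$ ($V_{m+1}=\{0\}$), $n_1=\dim V_1$, $N=\dim\mathfrak g$; basis $X_1,\dots,X_N$ ordered by degree, each $V_k$ spanned by a subcollection; points identified with canonical coordinates $(x_1,\dots,x_N)=\exp(\sum x_iX_i)(e)$. For $s\in\mathbb R$, $\Pi_{s,j}=\{x:x_j=s\}$, $\Pi_j=\Pi_{0,j}$; every $x$ is uniquely $x=p\exp(x_jX_j)$ with $p\in\Pi_j$, and $\mathrm{Pr}_j(x):=p$. Jacobians are with respect to Lebesgue measure in the coordinates (on the hyperplanes, $(N-1)$-dimensional Lebesgue measure). *)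

theory Defs
  imports "HOL-Analysis.Analysis"
begin

fun Ck :: "nat \<Rightarrow> 'a::real_normed_vector set \<Rightarrow> ('a \<Rightarrow> 'b::real_normed_vector) \<Rightarrow> bool" where
  "Ck 0 U f = continuous_on U f"
| "Ck (Suc k) U f =
     (\<exists>f'. (\<forall>x\<in>U. (f has_derivative f' x) (at x)) \<and> (\<forall>v. Ck k U (\<lambda>x. f' x v)))"

definition smooth_on :: "'a::real_normed_vector set \<Rightarrow> ('a \<Rightarrow> 'b::real_normed_vector) \<Rightarrow> bool" where
  "smooth_on U f \<longleftrightarrow> open U \<and> (\<forall>k. Ck k U f)"

definition smooth_near :: "'a::real_normed_vector set \<Rightarrow> ('a \<Rightarrow> 'b::real_normed_vector) \<Rightarrow> bool" where
  "smooth_near S f \<longleftrightarrow> (\<exists>U. S \<subseteq> U \<and> smooth_on U f)"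

text \<open>Leibniz determinant of a square matrix indexed by a finite set S (entry A k i: row k, column i).\<close>
definition det_on :: "'i set \<Rightarrow> ('i \<Rightarrow> 'i \<Rightarrow> real) \<Rightarrow> real" where
  "det_on S A = (\<Sum>p | p permutes S. of_int (sign p) * (\<Prod>k\<in>S. A k (p k)))"

text \<open>Left-invariant vector field with value v at the identity: X^v(x) = d/dt (x * tv) at t=0.\<close>
definition lvf :: "(real^'n \<Rightarrow> real^'n \<Rightarrow> real^'n) \<Rightarrow> real^'n \<Rightarrow> real^'n \<Rightarrow> real^'n::finite" where
  "lvf gmul v x = frechet_derivative (gmul x) (at 0) v"

definition XX :: "(real^'n \<Rightarrow> real^'n \<Rightarrow> real^'n) \<Rightarrow> 'n::finite \<Rightarrow> real^'n \<Rightarrow> real^'n" where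
  "XX gmul i = lvf gmul (axis i 1)"

text \<open>Lie bracket of the Lie algebra (identified with the tangent space at 0):
  [X^u, X^v](0) where [X,Y] = DY.X - DX.Y is the commutator of vector fields.\<close>
definition lie_br :: "(real^'n \<Rightarrow> real^'n \<Rightarrow> real^'n) \<Rightarrow> real^'n \<Rightarrow> real^'n \<Rightarrow> real^'n::finite" where
  "lie_br gmul u v =
     frechet_derivative (lvf gmul v) (at 0) (lvf gmul u 0)
     - frechet_derivative (lvf gmul u) (at 0) (lvf gmul v 0)"

definition layer :: "('n::finite \<Rightarrow> nat) \<Rightarrow> nat \<Rightarrow> (real^'n) set" where
  "layer deg k = span {axis i 1 | i. deg i = k}"

text \<open>carnot gmul deg m: R^N with product gmul is a Lie group (smooth group law, identity 0)
  in canonical (exponential) coordinates of the first kind w.r.t. the basis X_i,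
  i.e. exp(sum v_i X_i)(e) = v, equivalently t \<mapsto> t v is a one-parameter subgroup;
  its Lie algebra is stratified, V_k spanned by the X_i with deg i = k, k = 1..m,
  [V_1,V_k] = V_{k+1}, V_{m+1} = 0.\<close>
definition carnot :: "(real^'n \<Rightarrow> real^'n \<Rightarrow> real^'n) \<Rightarrow> ('n::finite \<Rightarrow> nat) \<Rightarrow> nat \<Rightarrow> bool" where
  "carnot gmul deg m \<longleftrightarrow>
     (\<forall>x y z. gmul (gmul x y) z = gmul x (gmul y z)) \<and>
     (\<forall>x. gmul 0 x = x \<and> gmul x 0 = x) \<and>
     (\<forall>x. \<exists>y. gmul x y = 0 \<and> gmul y x = 0) \<and>
     smooth_on UNIV (\<lambda>p. gmul (fst p) (snd p)) \<and>
     (\<forall>v s t. gmul (s *\<^sub>R v) (t *\<^sub>R v) = (s + t) *\<^sub>R v) \<and>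
     (\<forall>i. 1 \<le> deg i \<and> deg i \<le> m) \<and>
     (\<forall>k\<ge>1. span {lie_br gmul u v | u v. u \<in> layer deg 1 \<and> v \<in> layer deg k}
              = layer deg (k + 1))"

text \<open>exp(s X_j)(e) in canonical coordinates.\<close>
definition expX :: "'n::finite \<Rightarrow> real \<Rightarrow> real^'n" where
  "expX j s = s *\<^sub>R axis j 1"

definition Pi_hyp :: "real \<Rightarrow> 'n::finite \<Rightarrow> (real^'n) set" where
  "Pi_hyp s j = {x. x $ j = s}"

definition Pr :: "(real^'n \<Rightarrow> real^'n \<Rightarrow> real^'n) \<Rightarrow> 'n::finite \<Rightarrow> real^'n \<Rightarrow> real^'n" where
  "Pr gmul j x = (THE p. p \<in> Pi_hyp 0 j \<and> x = gmul p (expX j (x $ j)))"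

text \<open>F is a diffeomorphism of S = Pi_{s,j} onto T = Pi_j whose Jacobian (w.r.t. the
  (N-1)-dimensional Lebesgue measures, coordinates x_k, k \<noteq> j) equals 1.\<close>
definition hyp_diffeo_jac1 ::
  "'n::finite \<Rightarrow> (real^'n) set \<Rightarrow> (real^'n) set \<Rightarrow> (real^'n \<Rightarrow> real^'n) \<Rightarrow> bool" where
  "hyp_diffeo_jac1 j S T F \<longleftrightarrow>
     bij_betw F S T \<and> smooth_near S F \<and>
     (\<exists>G. smooth_near T G \<and> (\<forall>y\<in>T. G y \<in> S \<and> F (G y) = y) \<and> (\<forall>x\<in>S. G (F x) = x)) \<and>
     (\<forall>x\<in>S. det_on {k. k \<noteq> j}
                (\<lambda>k i. frechet_derivative F (at x) (axis i 1) $ k) = 1)"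

end

theory Submission
  imports Defs
begin


abbreviation DD :: "('a::real_normed_vector \<Rightarrow> 'b::real_normed_vector) \<Rightarrow> 'a \<Rightarrow> 'a \<Rightarrow> 'b" where
  "DD f x \<equiv> frechet_derivative f (at x)"

lemma Ck_cont: assumes "Ck k UNIV f" shows "continuous_on UNIV f"
proof (cases k)
  case 0 then show ?thesis using assms by simp
next
  case (Suc n)
  then obtain f' where "\<forall>x. (f has_derivative f' x) (at x)" using assms by auto
  then show ?thesis
    using continuous_at_imp_continuous_on has_derivative_continuous by blast
qed

lemma Ck_Suc_imp: "Ck (Suc k) UNIV f \<Longrightarrow> Ck k UNIV f"
proof (induction k arbitrary: f)
  case 0 then show ?case using Ck_cont[OF "0.prems"] by (simp only: Ck.simps(1))
next
  case (Suc k)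
  then obtain f' where "\<forall>x. (f has_derivative f' x) (at x)" "\<forall>v. Ck (Suc k) UNIV (\<lambda>x. f' x v)"
    by auto
  then show ?case using Suc.IH by auto
qed

lemma Ck_const: "Ck k UNIV (\<lambda>x. c)"
proof (induction k arbitrary: c)
  case 0 then show ?case by simp
next
  case (Suc k)
  show ?case unfolding Ck.simps(2) by (rule exI[of _ "\<lambda>x v. 0"]) (auto intro: Suc.IH)
qed

lemma Ck_add: "Ck k UNIV f \<Longrightarrow> Ck k UNIV g \<Longrightarrow> Ck k UNIV (\<lambda>x. f x + g x)"
proof (induction k arbitrary: f g)
  case 0 then show ?case by (simp add: continuous_on_add)
next
  case (Suc k)
  then obtain f' g' where f': "\<forall>x. (f has_derivative f' x) (at x)" "\<forall>v. Ck k UNIV (\<lambda>x. f' x v)"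
    and g': "\<forall>x. (g has_derivative g' x) (at x)" "\<forall>v. Ck k UNIV (\<lambda>x. g' x v)"
    by auto
  show ?case
    unfolding Ck.simps(2) by (rule exI[of _ "\<lambda>x v. f' x v + g' x v"]) (use f' g' Suc.IH in \<open>auto intro: has_derivative_add\<close>)
qed

lemma Ck_linear_comp:
  assumes L: "bounded_linear L"
  shows "Ck k UNIV f \<Longrightarrow> Ck k UNIV (\<lambda>x. L (f x))"
proof (induction k arbitrary: f)
  case 0 then show ?case
    using L continuous_on_compose[of UNIV f L] linear_continuous_on[OF L]
    by (simp add: comp_def continuous_on_subset)
next
  case (Suc k)
  then obtain f' where f': "\<forall>x. (f has_derivative f' x) (at x)" "\<forall>v. Ck k UNIV (\<lambda>x. f' x v)"
    by auto
  show ?case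
    unfolding Ck.simps(2) apply (rule exI[of _ "\<lambda>x v. L (f' x v)"])
    using f' Suc.IH by (auto intro: bounded_linear.has_derivative[OF L])
qed

lemma Ck_scaleR: "Ck k UNIV a \<Longrightarrow> Ck k UNIV b \<Longrightarrow> Ck k UNIV (\<lambda>x. a x *\<^sub>R b x)"
proof (induction k arbitrary: a b)
  case 0 then show ?case by (simp add: continuous_on_scaleR)
next
  case (Suc k)
  then obtain a' b' where a': "\<forall>x. (a has_derivative a' x) (at x)" "\<forall>v. Ck k UNIV (\<lambda>x. a' x v)"
    and b': "\<forall>x. (b has_derivative b' x) (at x)" "\<forall>v. Ck k UNIV (\<lambda>x. b' x v)"
    by auto
  have ak: "Ck k UNIV a" and bk: "Ck k UNIV b" using Suc.prems Ck_Suc_imp by auto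
  show ?case
    unfolding Ck.simps(2) apply (rule exI[of _ "\<lambda>x v. a x *\<^sub>R b' x v + a' x v *\<^sub>R b x"])
    using a' b' Suc.IH ak bk by (auto intro!: has_derivative_scaleR Ck_add)
qed

lemma Ck_sum: "finite S \<Longrightarrow> (\<And>i. i \<in> S \<Longrightarrow> Ck k UNIV (f i)) \<Longrightarrow> Ck k UNIV (\<lambda>x. \<Sum>i\<in>S. f i x)"
proof (induction S rule: finite_induct)
  case empty then show ?case by (simp add: Ck_const)
next
  case (insert i S) then show ?case by (simp add: Ck_add)
qed

lemma Ck_pair: "Ck k UNIV f \<Longrightarrow> Ck k UNIV g \<Longrightarrow> Ck k UNIV (\<lambda>x. (f x, g x))"
proof (induction k arbitrary: f g)
  case 0 then show ?case by (simp add: continuous_on_Pair)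
next
  case (Suc k)
  then obtain f' g' where f': "\<forall>x. (f has_derivative f' x) (at x)" "\<forall>v. Ck k UNIV (\<lambda>x. f' x v)"
    and g': "\<forall>x. (g has_derivative g' x) (at x)" "\<forall>v. Ck k UNIV (\<lambda>x. g' x v)"
    by auto
  show ?case
    unfolding Ck.simps(2) by (rule exI[of _ "\<lambda>x v. (f' x v, g' x v)"]) (use f' g' Suc.IH in \<open>auto intro: has_derivative_Pair\<close>)
qed

lemma linear_basis_expand:
  fixes f :: "'a::euclidean_space \<Rightarrow> 'b::real_normed_vector"
  assumes "linear f"
  shows "f w = (\<Sum>b\<in>Basis. (w \<bullet> b) *\<^sub>R f b)"
proof -
  have "f w = f (\<Sum>b\<in>Basis. (w \<bullet> b) *\<^sub>R b)" by (simp only: euclidean_representation)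
  also have "\<dots> = (\<Sum>b\<in>Basis. (w \<bullet> b) *\<^sub>R f b)"
    using assms by (simp only: linear_sum linear_scale)
  finally show ?thesis .
qed

lemma Ck_comp:
  fixes f :: "'b::euclidean_space \<Rightarrow> 'c::real_normed_vector" and g :: "'a::real_normed_vector \<Rightarrow> 'b"
  shows "Ck k UNIV f \<Longrightarrow> Ck k UNIV g \<Longrightarrow> Ck k UNIV (\<lambda>x. f (g x))"
proof (induction k arbitrary: f g)
  case 0 then show ?case
    using continuous_on_compose[of UNIV g f] by (simp add: comp_def continuous_on_subset)
next
  case (Suc k)
  then obtain f' g' where f': "\<forall>x. (f has_derivative f' x) (at x)" "\<forall>v. Ck k UNIV (\<lambda>x. f' x v)"
    and g': "\<forall>x. (g has_derivative g' x) (at x)" "\<forall>v. Ck k UNIV (\<lambda>x. g' x v)"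
    by auto
  have gk: "Ck k UNIV g" using Suc.prems Ck_Suc_imp by auto
  have lin: "linear (f' y)" for y using f' has_derivative_linear by blast
  have eq: "(\<lambda>x. f' (g x) (g' x v)) = (\<lambda>x. \<Sum>b\<in>Basis. (g' x v \<bullet> b) *\<^sub>R f' (g x) b)" for v
    by (intro ext) (rule linear_basis_expand[OF lin])
  have "Ck k UNIV (\<lambda>x. f' (g x) (g' x v))" for v
    unfolding eq
    apply (rule Ck_sum, simp)
    apply (rule Ck_scaleR)
     apply (rule Ck_linear_comp[OF bounded_linear_inner_left])
    using g' apply simp
    subgoal for b using Suc.IH[of "\<lambda>y. f' y b" g] f' gk by simp
    done
  moreover have "((\<lambda>x. f (g x)) has_derivative (\<lambda>v. f' (g x) (g' x v))) (at x)" for x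
    using diff_chain_at[OF g'(1)[rule_format, of x] f'(1)[rule_format, of "g x"]]
    by (simp add: comp_def)
  ultimately show ?case unfolding Ck.simps(2) by (intro exI[of _ "\<lambda>x v. f' (g x) (g' x v)"]) auto
qed

definition smooth :: "('a::euclidean_space \<Rightarrow> 'b::real_normed_vector) \<Rightarrow> bool" where
  "smooth f \<longleftrightarrow> (\<forall>k. Ck k UNIV f)"

lemma smooth_intro:
  assumes "\<And>x. (f has_derivative f' x) (at x)" "\<And>v. smooth (\<lambda>x. f' x v)"
  shows "smooth f"
  unfolding smooth_def
proof
  fix k show "Ck k UNIV f"
  proof (cases k)
    case 0
    have "continuous_on UNIV f" using assms(1)
      using continuous_at_imp_continuous_on has_derivative_continuous by blast
    then show ?thesis using 0 by (simp only: Ck.simps(1))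
  next
    case (Suc n)
    then show ?thesis using assms unfolding smooth_def by auto
  qed
qed

lemma smooth_deriv:
  assumes "smooth f"
  shows "(f has_derivative DD f x) (at x)"
proof -
  from assms have "Ck (Suc 0) UNIV f" unfolding smooth_def by blast
  then obtain f' where "\<forall>x. (f has_derivative f' x) (at x)" by auto
  then have "(f has_derivative f' x) (at x)" by blast
  moreover then have "f' x = DD f x" by (rule frechet_derivative_at)
  ultimately show ?thesis by simp
qed

lemma smooth_DD:
  assumes "smooth f"
  shows "smooth (\<lambda>x. DD f x v)"
  unfolding smooth_def
proof
  fix k
  from assms have "Ck (Suc k) UNIV f" unfolding smooth_def by blast
  then obtain f' where f': "\<forall>x. (f has_derivative f' x) (at x)" "\<forall>v. Ck k UNIV (\<lambda>x. f' x v)" by auto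
  have "f' x = DD f x" for x using f' frechet_derivative_at by blast
  then have "(\<lambda>x. DD f x v) = (\<lambda>x. f' x v)" by simp
  then show "Ck k UNIV (\<lambda>x. DD f x v)" using f' by simp
qed

lemma smooth_cont: "smooth f \<Longrightarrow> continuous_on UNIV f"
  unfolding smooth_def using Ck_cont by blast

lemma smooth_cont_at: "smooth f \<Longrightarrow> isCont f x"
  using smooth_cont continuous_on_eq_continuous_at by blast

lemma smooth_const[simp]: "smooth (\<lambda>x. c)"
  unfolding smooth_def using Ck_const by blast

lemma smooth_add: "smooth f \<Longrightarrow> smooth g \<Longrightarrow> smooth (\<lambda>x. f x + g x)"
  unfolding smooth_def using Ck_add by blast

lemma smooth_scaleR: "smooth a \<Longrightarrow> smooth b \<Longrightarrow> smooth (\<lambda>x. a x *\<^sub>R b x)"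
  unfolding smooth_def using Ck_scaleR by blast

lemma smooth_linear_comp: "bounded_linear L \<Longrightarrow> smooth f \<Longrightarrow> smooth (\<lambda>x. L (f x))"
  unfolding smooth_def using Ck_linear_comp by blast

lemma smooth_linear: "bounded_linear L \<Longrightarrow> smooth L"
  by (rule smooth_intro[of L "\<lambda>x. L"]) (auto intro: bounded_linear_imp_has_derivative)

lemma smooth_id: "smooth (\<lambda>x. x)"
  using smooth_linear[OF bounded_linear_ident] by (simp add: id_def)

lemma smooth_comp: "smooth f \<Longrightarrow> smooth g \<Longrightarrow> smooth (\<lambda>x. f (g x))"
  unfolding smooth_def using Ck_comp by blast

lemma smooth_pair: "smooth f \<Longrightarrow> smooth g \<Longrightarrow> smooth (\<lambda>x. (f x, g x))"
  unfolding smooth_def using Ck_pair by blast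

lemma smooth_minus: "smooth f \<Longrightarrow> smooth (\<lambda>x. - f x)"
  using smooth_linear_comp[OF bounded_linear_minus[OF bounded_linear_ident]] by auto

lemma smooth_diff: "smooth f \<Longrightarrow> smooth g \<Longrightarrow> smooth (\<lambda>x. f x - g x)"
  using smooth_add[of f "\<lambda>x. - g x"] smooth_minus by auto

lemma smooth_fst: "smooth fst" by (rule smooth_linear[OF bounded_linear_fst])
lemma smooth_snd: "smooth snd" by (rule smooth_linear[OF bounded_linear_snd])

lemma smooth_vec_nth: "smooth f \<Longrightarrow> smooth (\<lambda>x. f x $ i)"
  using smooth_linear_comp[OF bounded_linear_vec_nth] by blast

lemma smooth_inner: "smooth f \<Longrightarrow> smooth (\<lambda>x. f x \<bullet> c)"
  using smooth_linear_comp[OF bounded_linear_inner_left] by blast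


declare Ck.simps[simp del]

lemma DD_eqI: assumes "(f has_derivative f') (at x)" shows "DD f x w = f' w"
proof -
  have "f' = DD f x" by (rule frechet_derivative_at[OF assms])
  then show ?thesis by simp
qed

lemma linear_DD: "smooth f \<Longrightarrow> linear (DD f x)"
  using smooth_deriv has_derivative_linear by blast

lemma DD_comp:
  assumes "smooth f" "smooth g"
  shows "DD (\<lambda>x. f (g x)) x w = DD f (g x) (DD g x w)"
  apply (rule DD_eqI)
  using diff_chain_at[OF smooth_deriv[OF assms(2)] smooth_deriv[OF assms(1)]]
  by (simp add: comp_def)

lemma DD_linear: "bounded_linear L \<Longrightarrow> DD L x w = L w"
  by (rule DD_eqI) (rule bounded_linear_imp_has_derivative)

lemma DD_id: "DD (\<lambda>x. x) x w = w"
  by (rule DD_eqI) (rule has_derivative_ident)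

lemma DD_const: "DD (\<lambda>x. c) x w = 0"
  by (rule DD_eqI) (rule has_derivative_const)

lemma DD_add:
  assumes "smooth f" "smooth g"
  shows "DD (\<lambda>x. f x + g x) x w = DD f x w + DD g x w"
  by (rule DD_eqI) (rule has_derivative_add[OF smooth_deriv[OF assms(1)] smooth_deriv[OF assms(2)]])

lemma DD_diff:
  assumes "smooth f" "smooth g"
  shows "DD (\<lambda>x. f x - g x) x w = DD f x w - DD g x w"
  by (rule DD_eqI) (rule has_derivative_diff[OF smooth_deriv[OF assms(1)] smooth_deriv[OF assms(2)]])

lemma DD_minus:
  assumes "smooth f"
  shows "DD (\<lambda>x. - f x) x w = - DD f x w"
  by (rule DD_eqI) (rule has_derivative_minus[OF smooth_deriv[OF assms(1)]])

lemma DD_scaleR: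
  assumes "smooth a" "smooth b"
  shows "DD (\<lambda>x. a x *\<^sub>R b x) x w = a x *\<^sub>R DD b x w + DD a x w *\<^sub>R b x"
  by (rule DD_eqI) (rule has_derivative_scaleR[OF smooth_deriv[OF assms(1)] smooth_deriv[OF assms(2)]])

lemma DD_pair:
  assumes "smooth f" "smooth g"
  shows "DD (\<lambda>x. (f x, g x)) x w = (DD f x w, DD g x w)"
  by (rule DD_eqI) (rule has_derivative_Pair[OF smooth_deriv[OF assms(1)] smooth_deriv[OF assms(2)]])

lemma DD_lin_comp:
  assumes "bounded_linear L" "smooth f"
  shows "DD (\<lambda>x. L (f x)) x w = L (DD f x w)"
  by (rule DD_eqI) (rule bounded_linear.has_derivative[OF assms(1) smooth_deriv[OF assms(2)]])

lemma DD_nth: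
  assumes "smooth f"
  shows "DD (\<lambda>x. f x $ k) x w = DD f x w $ k"
  using DD_lin_comp[OF bounded_linear_vec_nth assms] .

lemma DD_translate: "DD (\<lambda>x. x + c) x w = w"
  by (rule DD_eqI) (auto intro!: derivative_eq_intros)

lemma smooth_translate: "smooth g \<Longrightarrow> smooth (\<lambda>x. g (x + c))"
  using smooth_comp[of g "\<lambda>x. x + c"] smooth_add[OF smooth_id smooth_const] by blast

lemma mvt_dir:
  fixes G :: "'a::euclidean_space \<Rightarrow> real"
  assumes "smooth G" "h > 0"
  shows "\<exists>t. 0 < t \<and> t < h \<and> G (q + h *\<^sub>R d) - G q = h * DD G (q + t *\<^sub>R d) d"
proof -
  have lin: "linear (DD G y)" for y using linear_DD[OF assms(1)] .
  have "((\<lambda>s. G (q + s *\<^sub>R d)) has_real_derivative DD G (q + s *\<^sub>R d) d) (at s)" for s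
  proof -
    have d1: "((\<lambda>s. q + s *\<^sub>R d) has_derivative (\<lambda>s'. s' *\<^sub>R d)) (at s)"
      by (auto intro!: derivative_eq_intros)
    have "((\<lambda>s. G (q + s *\<^sub>R d)) has_derivative (\<lambda>s'. DD G (q + s *\<^sub>R d) (s' *\<^sub>R d))) (at s)"
      using diff_chain_at[OF d1 smooth_deriv[OF assms(1)]] by (simp add: comp_def)
    moreover have "(\<lambda>s'. DD G (q + s *\<^sub>R d) (s' *\<^sub>R d)) = (*) (DD G (q + s *\<^sub>R d) d)"
      by (rule ext) (simp add: linear_scale[OF lin] mult.commute)
    ultimately show ?thesis unfolding has_field_derivative_def by simp
  qed
  from MVT2[OF assms(2), of "\<lambda>s. G (q + s *\<^sub>R d)", OF this]
  obtain z where "0 < z" "z < h" "G (q + h *\<^sub>R d) - G (q + 0 *\<^sub>R d) = (h - 0) * DD G (q + z *\<^sub>R d) d"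
    by blast
  then show ?thesis by auto
qed

lemma sym_lim:
  fixes Q1 Q2 :: "'a::real_normed_vector \<Rightarrow> real"
  assumes "isCont Q1 p" "isCont Q2 p" "c \<ge> 0"
    and H: "\<And>h. h > 0 \<Longrightarrow> \<exists>\<xi>1 \<xi>2. norm (\<xi>1 - p) \<le> h * c \<and> norm (\<xi>2 - p) \<le> h * c \<and> Q1 \<xi>1 = Q2 \<xi>2"
  shows "Q1 p = Q2 p"
proof (rule ccontr)
  assume ne: "Q1 p \<noteq> Q2 p"
  define e where "e = \<bar>Q1 p - Q2 p\<bar> / 2"
  have e: "e > 0" using ne by (simp add: e_def)
  obtain d1 where d1: "d1 > 0" "\<And>x. dist x p < d1 \<Longrightarrow> dist (Q1 x) (Q1 p) < e"
    using assms(1) e unfolding continuous_at_eps_delta by blast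
  obtain d2 where d2: "d2 > 0" "\<And>x. dist x p < d2 \<Longrightarrow> dist (Q2 x) (Q2 p) < e"
    using assms(2) e unfolding continuous_at_eps_delta by blast
  define h where "h = min d1 d2 / (2 * (c + 1))"
  have h: "h > 0" using d1 d2 assms(3) by (simp add: h_def)
  have hc: "h * c < min d1 d2"
  proof -
    have "h * c \<le> h * (c + 1) " using h by simp
    also have "\<dots> = min d1 d2 / 2"
    proof -
      have "c + 1 > 0" using assms(3) by simp
      then show ?thesis unfolding h_def by (simp add: field_simps)
    qed
    also have "\<dots> < min d1 d2" using d1 d2 by (simp add: min_def)
    finally show ?thesis by linarith
  qed
  obtain \<xi>1 \<xi>2 where x: "norm (\<xi>1 - p) \<le> h * c" "norm (\<xi>2 - p) \<le> h * c" "Q1 \<xi>1 = Q2 \<xi>2"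
    using H[OF h] by blast
  have "dist \<xi>1 p < d1" "dist \<xi>2 p < d2" using x hc by (auto simp: dist_norm)
  then have "dist (Q1 \<xi>1) (Q1 p) < e" "dist (Q2 \<xi>2) (Q2 p) < e" using d1 d2 by auto
  then have "\<bar>Q1 p - Q2 p\<bar> < 2 * e" using x(3) by (auto simp: dist_real_def)
  then show False by (simp add: e_def)
qed

lemma sym2_real:
  fixes g :: "'a::euclidean_space \<Rightarrow> real"
  assumes g: "smooth g"
  shows "DD (\<lambda>x. DD g x u) p v = DD (\<lambda>x. DD g x v) p u"
proof -
  define Q where "Q = (\<lambda>v u x. DD (\<lambda>y. DD g y v) x u)"
  have key: "\<exists>\<xi>. norm (\<xi> - p) \<le> h * (norm u + norm v) \<and>
     g (p + h *\<^sub>R v + h *\<^sub>R u) - g (p + h *\<^sub>R v) - g (p + h *\<^sub>R u) + g p = h * h * Q v u \<xi>"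
    if h: "h > 0" for h u v
  proof -
    define G1 where "G1 = (\<lambda>x. g (x + h *\<^sub>R u) - g x)"
    have sG1: "smooth G1" unfolding G1_def by (intro smooth_diff smooth_translate g)
    obtain s where s: "0 < s" "s < h" "G1 (p + h *\<^sub>R v) - G1 p = h * DD G1 (p + s *\<^sub>R v) v"
      using mvt_dir[OF sG1 h] by blast
    have "DD G1 (p + s *\<^sub>R v) v = DD g (p + s *\<^sub>R v + h *\<^sub>R u) v - DD g (p + s *\<^sub>R v) v"
      unfolding G1_def
      using DD_diff[OF smooth_translate[OF g] g] DD_comp[OF g smooth_add[OF smooth_id smooth_const]]
        by (simp add: DD_translate)
    moreover obtain t where t: "0 < t" "t < h"
      "DD g (p + s *\<^sub>R v + h *\<^sub>R u) v - DD g (p + s *\<^sub>R v) v = h * DD (\<lambda>y. DD g y v) (p + s *\<^sub>R v + t *\<^sub>R u) u"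
      using mvt_dir[OF smooth_DD[OF g] h, of "p + s *\<^sub>R v" u] by blast
    ultimately have eq: "G1 (p + h *\<^sub>R v) - G1 p = h * h * Q v u (p + s *\<^sub>R v + t *\<^sub>R u)"
      using s by (simp add: Q_def)
    have "norm (p + s *\<^sub>R v + t *\<^sub>R u - p) \<le> h * (norm u + norm v)"
    proof -
      have "norm (p + s *\<^sub>R v + t *\<^sub>R u - p) = norm (s *\<^sub>R v + t *\<^sub>R u)" by simp
      also have "\<dots> \<le> norm (s *\<^sub>R v) + norm (t *\<^sub>R u)" by (rule norm_triangle_ineq)
      also have "\<dots> = s * norm v + t * norm u" using s t by simp
      also have "\<dots> \<le> h * norm v + h * norm u"
        using s t by (intro add_mono mult_right_mono) auto
      finally show ?thesis by (simp add: algebra_simps)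
    qed
    then show ?thesis using eq unfolding G1_def by (intro exI[of _ "p + s *\<^sub>R v + t *\<^sub>R u"]) (simp add: algebra_simps)
  qed
  have sQ: "smooth (Q a b)" for a b unfolding Q_def by (intro smooth_DD g)
  have H: "\<exists>\<xi>1 \<xi>2. norm (\<xi>1 - p) \<le> h * (norm u + norm v) \<and> norm (\<xi>2 - p) \<le> h * (norm u + norm v) \<and> Q v u \<xi>1 = Q u v \<xi>2"
    if h: "h > 0" for h
  proof -
    obtain \<xi>1 where 1: "norm (\<xi>1 - p) \<le> h * (norm u + norm v)"
      "g (p + h *\<^sub>R v + h *\<^sub>R u) - g (p + h *\<^sub>R v) - g (p + h *\<^sub>R u) + g p = h * h * Q v u \<xi>1"
      using key[OF h, of u v] by blast
    obtain \<xi>2 where 2: "norm (\<xi>2 - p) \<le> h * (norm v + norm u)"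
      "g (p + h *\<^sub>R u + h *\<^sub>R v) - g (p + h *\<^sub>R u) - g (p + h *\<^sub>R v) + g p = h * h * Q u v \<xi>2"
      using key[OF h, of v u] by blast
    have e: "p + h *\<^sub>R u + h *\<^sub>R v = p + h *\<^sub>R v + h *\<^sub>R u" by (simp add: algebra_simps)
    have "h * h * Q v u \<xi>1 = h * h * Q u v \<xi>2" using 1(2) 2(2) unfolding e by linarith
    then have "Q v u \<xi>1 = Q u v \<xi>2" using h by simp
    then show ?thesis using 1(1) 2(1) by (auto simp: add.commute)
  qed
  have "Q v u p = Q u v p"
    by (rule sym_lim[OF smooth_cont_at[OF sQ] smooth_cont_at[OF sQ] _ H]) auto
  then show ?thesis by (simp add: Q_def)
qed

lemma sym2:
  fixes f :: "'a::euclidean_space \<Rightarrow> real^'n"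
  assumes f: "smooth f"
  shows "DD (\<lambda>x. DD f x u) p v = DD (\<lambda>x. DD f x v) p u"
unfolding vec_eq_iff proof
  fix k
  have g: "smooth (\<lambda>x. f x $ k)" using smooth_vec_nth[OF f] .
  have e: "(\<lambda>x. DD f x w $ k) = (\<lambda>x. DD (\<lambda>x. f x $ k) x w)" for w
    using DD_nth[OF f] by simp
  have "DD (\<lambda>x. DD f x u) p v $ k = DD (\<lambda>x. DD f x u $ k) p v"
    using DD_nth[OF smooth_DD[OF f]] by simp
  also have "\<dots> = DD (\<lambda>x. DD (\<lambda>x. f x $ k) x u) p v" unfolding e ..
  also have "\<dots> = DD (\<lambda>x. DD (\<lambda>x. f x $ k) x v) p u" by (rule sym2_real[OF g])
  also have "\<dots> = DD (\<lambda>x. DD f x v $ k) p u" unfolding e ..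
  also have "\<dots> = DD (\<lambda>x. DD f x v) p u $ k"
    using DD_nth[OF smooth_DD[OF f]] by simp
  finally show "DD (\<lambda>x. DD f x u) p v $ k = DD (\<lambda>x. DD f x v) p u $ k" .
qed


lemma axis_nth_if: "axis i (1::real) $ k = (if k = i then 1 else 0)" by (simp add: axis_def)

lemma vec_expand: "(z::real^'n) = (\<Sum>l\<in>UNIV. z $ l *\<^sub>R axis l 1)"
  using basis_expansion[of z] by (simp add: scalar_mult_eq_scaleR)

lemma linear_expand:
  fixes L :: "real^'n \<Rightarrow> real^'m"
  assumes "linear L"
  shows "L z $ k = (\<Sum>l\<in>UNIV. z $ l * L (axis l 1) $ k)"
proof -
  have "L z = L (\<Sum>l\<in>UNIV. z $ l *\<^sub>R axis l 1)" using vec_expand[of z] by simp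
  also have "\<dots> = (\<Sum>l\<in>UNIV. z $ l *\<^sub>R L (axis l 1))"
    using assms by (simp only: linear_sum linear_scale)
  finally show ?thesis by (simp add: sum_component)
qed

context
  fixes deg :: "'n::finite \<Rightarrow> nat"
begin

definition unip :: "(real^'n \<Rightarrow> real^'n) \<Rightarrow> bool" where
  "unip L \<longleftrightarrow> (\<forall>i k. deg k \<le> deg i \<longrightarrow> L (axis i 1) $ k = (if k = i then 1 else 0))"

lemma unip_comp:
  assumes "linear L" "linear M" "unip L" "unip M"
  shows "unip (\<lambda>z. L (M z))"
  unfolding unip_def
proof (intro allI impI)
  fix i k assume ki: "deg k \<le> deg i"
  have "L (M (axis i 1)) $ k = (\<Sum>l\<in>UNIV. M (axis i 1) $ l * L (axis l 1) $ k)"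
    by (rule linear_expand[OF assms(1)])
  also have "\<dots> = (\<Sum>l\<in>UNIV. if l = i then L (axis i 1) $ k else 0)"
  proof (rule sum.cong[OF refl])
    fix l
    show "M (axis i 1) $ l * L (axis l 1) $ k = (if l = i then L (axis i 1) $ k else 0)"
    proof (cases "deg l \<le> deg i")
      case True
      then show ?thesis using assms(4) unfolding unip_def by auto
    next
      case False
      then have "deg k \<le> deg l" "l \<noteq> k" using ki by auto
      then have "L (axis l 1) $ k = 0" using assms(3) unfolding unip_def by auto
      then show ?thesis using False by auto
    qed
  qed
  also have "\<dots> = L (axis i 1) $ k" by simp
  also have "\<dots> = (if k = i then 1 else 0)" using assms(3) ki unfolding unip_def by auto
  finally show "L (M (axis i 1)) $ k = (if k = i then 1 else 0)" .
qed

lemma unip_inv: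
  assumes "linear L" "linear M" "\<And>z. L (M z) = z" "unip L"
  shows "unip M"
  unfolding unip_def
proof (rule allI)
  fix i
  have "\<forall>k. deg k = n \<longrightarrow> deg k \<le> deg i \<longrightarrow> M (axis i 1) $ k = (if k = i then 1 else 0)" for n
  proof (induction n rule: less_induct)
    case (less n)
    show ?case
    proof (intro allI impI)
      fix k assume kn: "deg k = n" and ki: "deg k \<le> deg i"
      have "(if k = i then 1 else 0) = L (M (axis i 1)) $ k" using assms(3) by (simp add: axis_nth_if)
      also have "\<dots> = (\<Sum>l\<in>UNIV. M (axis i 1) $ l * L (axis l 1) $ k)"
        by (rule linear_expand[OF assms(1)])
      also have "\<dots> = (\<Sum>l\<in>UNIV. if l = k then M (axis i 1) $ k else 0)"
      proof (rule sum.cong[OF refl])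
        fix l
        show "M (axis i 1) $ l * L (axis l 1) $ k = (if l = k then M (axis i 1) $ k else 0)"
        proof (cases "deg l < deg k")
          case True
          then have "M (axis i 1) $ l = 0" using less.IH[of "deg l"] kn ki by auto
          then show ?thesis using True by auto
        next
          case False
          then show ?thesis using assms(4) unfolding unip_def by auto
        qed
      qed
      also have "\<dots> = M (axis i 1) $ k" by simp
      finally show "M (axis i 1) $ k = (if k = i then 1 else 0)" by simp
    qed
  qed
  then show "\<forall>k. deg k \<le> deg i \<longrightarrow> M (axis i 1) $ k = (if k = i then 1 else 0)" by blast
qed

lemma unip_id: "unip (\<lambda>z. z)" unfolding unip_def by (simp add: axis_nth_if)

lemma unip_coord:
  assumes "linear L" "unip L" "\<And>i. deg k \<le> deg i"
  shows "L z $ k = z $ k"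
proof -
  have "L z $ k = (\<Sum>l\<in>UNIV. z $ l * L (axis l 1) $ k)" by (rule linear_expand[OF assms(1)])
  also have "\<dots> = (\<Sum>l\<in>UNIV. if l = k then z $ k else 0)"
    by (rule sum.cong[OF refl]) (use assms(2,3) in \<open>auto simp: unip_def\<close>)
  finally show ?thesis by simp
qed

lemma det_unip:
  fixes S :: "'n set" and M :: "'n \<Rightarrow> 'n \<Rightarrow> real"
  assumes MU: "\<And>i k. i \<in> S \<Longrightarrow> k \<in> S \<Longrightarrow> deg k \<le> deg i \<Longrightarrow> M k i = (if k = i then 1 else 0)"
  shows "det_on S M = 1"
proof -
  have fin: "finite S" by simp
  have zero: "(\<Prod>k\<in>S. M k (p k)) = 0" if p: "p permutes S" "p \<noteq> id" for p
  proof (rule ccontr)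
    assume nz: "(\<Prod>k\<in>S. M k (p k)) \<noteq> 0"
    have pS: "p k \<in> S" if "k \<in> S" for k using p(1) that by (simp add: permutes_in_image)
    have nzk: "M k (p k) \<noteq> 0" if "k \<in> S" for k using nz that fin by auto
    have alt: "p k = k \<or> deg (p k) < deg k" if k: "k \<in> S" for k
    proof (cases "deg k \<le> deg (p k)")
      case True
      then have "M k (p k) = (if k = p k then 1 else 0)" using MU[OF pS[OF k] k] by simp
      then show ?thesis using nzk[OF k] by (auto split: if_splits)
    qed auto
    have "\<exists>k\<in>S. p k \<noteq> k"
    proof (rule ccontr)
      assume "\<not> (\<exists>k\<in>S. p k \<noteq> k)"
      then have "p x = x" for x using p(1) unfolding permutes_def by (cases "x \<in> S") auto
      then show False using p(2) by auto
    qed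
    then obtain k0 where k0: "k0 \<in> S" "p k0 \<noteq> k0" by blast
    have "(\<Sum>k\<in>S. deg (p k)) < (\<Sum>k\<in>S. deg k)"
      apply (rule sum_strict_mono_ex1[OF fin])
      using alt k0 by force+
    moreover have "(\<Sum>k\<in>S. deg k) = (\<Sum>k\<in>S. deg (p k))"
      using sum.permute[OF p(1), of deg] by (simp add: comp_def)
    ultimately show False by simp
  qed
  have "det_on S M = (\<Sum>p\<in>{p. p permutes S}. of_int (sign p) * (\<Prod>k\<in>S. M k (p k)))"
    unfolding det_on_def by simp
  also have "\<dots> = (\<Sum>p\<in>{p. p permutes S}. if p = id then 1 else 0)"
  proof (rule sum.cong[OF refl])
    fix p assume p: "p \<in> {p. p permutes S}"
    show "of_int (sign p) * (\<Prod>k\<in>S. M k (p k)) = (if p = id then 1 else 0)"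
    proof (cases "p = id")
      case True
      have "(\<Prod>k\<in>S. M k k) = 1" using MU by (intro prod.neutral) auto
      then show ?thesis using True by (simp add: sign_id)
    next
      case False
      then show ?thesis using zero p by simp
    qed
  qed
  also have "\<dots> = 1" using finite_permutations[OF fin] permutes_id[of S]
    by (simp add: sum.delta')
  finally show ?thesis .
qed

end

locale carn =
  fixes gmul :: "real^'n::finite \<Rightarrow> real^'n \<Rightarrow> real^'n"
    and deg :: "'n \<Rightarrow> nat" and m :: nat
  assumes carnot: "carnot gmul deg m"
begin

lemma assoc: "gmul (gmul x y) z = gmul x (gmul y z)"
  using carnot unfolding carnot_def by blast

lemma lid[simp]: "gmul 0 x = x" and rid[simp]: "gmul x 0 = x"
  using carnot unfolding carnot_def by blast+

lemma oneparam: "gmul (s *\<^sub>R v) (t *\<^sub>R v) = (s + t) *\<^sub>R v"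
  using carnot unfolding carnot_def by blast

lemma deg_ge1: "1 \<le> deg i" and deg_le: "deg i \<le> m"
  using carnot unfolding carnot_def by blast+

lemma strat: "k \<ge> 1 \<Longrightarrow> span {lie_br gmul u v | u v. u \<in> layer deg 1 \<and> v \<in> layer deg k} = layer deg (k + 1)"
  using carnot unfolding carnot_def by blast

lemma smooth_mu: "smooth (\<lambda>p. gmul (fst p) (snd p))"
  using carnot unfolding carnot_def smooth_on_def smooth_def by blast

lemma rinv[simp]: "gmul x (- x) = 0"
  using oneparam[of 1 x "-1"] by simp

lemma linv[simp]: "gmul (- x) x = 0"
  using oneparam[of "-1" x 1] by simp

lemma inv_unique: assumes "gmul z w = 0" shows "w = - z"
proof -
  have "w = gmul (gmul (- z) z) w" by simp
  also have "\<dots> = gmul (- z) (gmul z w)" by (rule assoc)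
  also have "\<dots> = - z" using assms by simp
  finally show ?thesis .
qed

lemma inv_mul: "- gmul x y = gmul (- y) (- x)"
proof -
  have "gmul (gmul x y) (gmul (- y) (- x)) = 0"
    by (simp add: assoc) (metis assoc lid linv rinv)
  then show ?thesis using inv_unique by metis
qed

lemma cancel_left: "gmul (- a) (gmul a x) = x"
  by (metis assoc lid linv)

lemma cancel_left2: "gmul a (gmul (- a) x) = x"
  by (metis assoc lid rinv)

lemma cancel_right: "gmul (gmul x a) (- a) = x"
  by (metis assoc rid rinv)

lemma cancel_right2: "gmul (gmul x (- a)) a = x"
  by (metis assoc rid linv)

lemma smooth_gmul: "smooth f \<Longrightarrow> smooth g \<Longrightarrow> smooth (\<lambda>x. gmul (f x) (g x))"
  using smooth_comp[OF smooth_mu smooth_pair] by simp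

definition Dl :: "real^'n \<Rightarrow> real^'n \<Rightarrow> real^'n \<Rightarrow> real^'n" where
  "Dl x y a = DD (\<lambda>z. gmul z y) x a"

definition Dr :: "real^'n \<Rightarrow> real^'n \<Rightarrow> real^'n \<Rightarrow> real^'n" where
  "Dr x y b = DD (gmul x) y b"

abbreviation "MU \<equiv> (\<lambda>p. gmul (fst p) (snd p))"

lemma Dl_eq: "Dl x y a = DD MU (x, y) (a, 0)"
proof -
  have "DD (\<lambda>z. MU (z, y)) x a = DD MU (x, y) (DD (\<lambda>z. (z, y)) x a)"
    by (rule DD_comp[OF smooth_mu smooth_pair[OF smooth_id smooth_const]])
  moreover have "DD (\<lambda>z. (z, y)) x a = (a, 0)"
    using DD_pair[OF smooth_id smooth_const] by (simp add: DD_id DD_const)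
  ultimately show ?thesis unfolding Dl_def by simp
qed

lemma Dr_eq: "Dr x y b = DD MU (x, y) (0, b)"
proof -
  have "DD (\<lambda>z. MU (x, z)) y b = DD MU (x, y) (DD (\<lambda>z. (x, z)) y b)"
    by (rule DD_comp[OF smooth_mu smooth_pair[OF smooth_const smooth_id]])
  moreover have "DD (\<lambda>z. (x, z)) y b = (0, b)"
    using DD_pair[OF smooth_const smooth_id] by (simp add: DD_id DD_const)
  ultimately show ?thesis unfolding Dr_def by (simp add: fun_eq_iff)
qed

lemma DD_gmul:
  assumes "smooth f" "smooth g"
  shows "DD (\<lambda>x. gmul (f x) (g x)) x w = Dl (f x) (g x) (DD f x w) + Dr (f x) (g x) (DD g x w)"
proof -
  have "DD (\<lambda>x. MU (f x, g x)) x w = DD MU (f x, g x) (DD (\<lambda>x. (f x, g x)) x w)"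
    by (rule DD_comp[OF smooth_mu smooth_pair[OF assms]])
  also have "\<dots> = DD MU (f x, g x) (DD f x w, DD g x w)" using DD_pair[OF assms] by simp
  also have "\<dots> = DD MU (f x, g x) ((DD f x w, 0) + (0, DD g x w))" by simp
  also have "\<dots> = DD MU (f x, g x) (DD f x w, 0) + DD MU (f x, g x) (0, DD g x w)"
    by (rule linear_add[OF linear_DD[OF smooth_mu]])
  finally show ?thesis by (simp add: Dl_eq Dr_eq)
qed

lemma linear_Dl: "linear (Dl x y)"
proof -
  have "Dl x y = DD (\<lambda>z. gmul z y) x" by (simp add: Dl_def fun_eq_iff)
  then show ?thesis using linear_DD[OF smooth_gmul[OF smooth_id smooth_const]] by simp
qed

lemma linear_Dr: "linear (Dr x y)"
proof -
  have "Dr x y = DD (gmul x) y" by (simp add: Dr_def fun_eq_iff)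
  moreover have "smooth (gmul x)" using smooth_gmul[OF smooth_const smooth_id] by simp
  ultimately show ?thesis using linear_DD by metis
qed

lemma smooth_Dl: assumes "smooth f" "smooth g" shows "smooth (\<lambda>x. Dl (f x) (g x) a)"
  unfolding Dl_eq using smooth_comp[OF smooth_DD[OF smooth_mu, of "(a,0)"] smooth_pair[OF assms]] by simp

lemma smooth_Dr: assumes "smooth f" "smooth g" shows "smooth (\<lambda>x. Dr (f x) (g x) a)"
  unfolding Dr_eq using smooth_comp[OF smooth_DD[OF smooth_mu, of "(0,a)"] smooth_pair[OF assms]] by simp

lemma gmul0_id: "gmul 0 = (\<lambda>x. x)" by (rule ext) simp

lemma Dr_0[simp]: "Dr 0 y b = b"
  unfolding Dr_def gmul0_id by (simp add: DD_id)

lemma Dl_0[simp]: "Dl x 0 a = a"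
  unfolding Dl_def by (simp add: DD_id)

end


lemma smooth_sum: "finite S \<Longrightarrow> (\<And>i. i \<in> S \<Longrightarrow> smooth (f i)) \<Longrightarrow> smooth (\<lambda>x. \<Sum>i\<in>S. f i x)"
  unfolding smooth_def using Ck_sum by blast

lemma DD_sum:
  assumes "finite S" "\<And>i. i \<in> S \<Longrightarrow> smooth (f i)"
  shows "DD (\<lambda>x. \<Sum>i\<in>S. f i x) x w = (\<Sum>i\<in>S. DD (f i) x w)"
  by (rule DD_eqI) (rule has_derivative_sum, use assms smooth_deriv in auto)

lemma DD_partial1:
  assumes "smooth \<Phi>"
  shows "DD (\<lambda>x. \<Phi> (x, c)) x0 v = DD \<Phi> (x0, c) (v, 0)"
proof -
  have 1: "DD (\<lambda>x. \<Phi> (x,c)) x0 v = DD \<Phi> (x0,c) (DD (\<lambda>x. (x,c)) x0 v)"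
    by (rule DD_comp[OF assms smooth_pair[OF smooth_id smooth_const]])
  have 2: "DD (\<lambda>x. (x,c)) x0 v = (v,0)" by (rule DD_eqI) (auto intro!: derivative_eq_intros)
  show ?thesis by (simp only: 1 2)
qed

lemma DD_partial2:
  assumes "smooth \<Phi>"
  shows "DD (\<lambda>y. \<Phi> (c, y)) y0 z = DD \<Phi> (c, y0) (0, z)"
proof -
  have 1: "DD (\<lambda>y. \<Phi> (c,y)) y0 z = DD \<Phi> (c,y0) (DD (\<lambda>y. (c,y)) y0 z)"
    by (rule DD_comp[OF assms smooth_pair[OF smooth_const smooth_id]])
  have 2: "DD (\<lambda>y. (c,y)) y0 z = (0,z)" by (rule DD_eqI) (auto intro!: derivative_eq_intros)
  show ?thesis by (simp only: 1 2)
qed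

context
  fixes F :: "'a::euclidean_space \<Rightarrow> real^'n \<Rightarrow> 'c::real_normed_vector"
  assumes linF: "\<And>x. linear (F x)" and smF: "\<And>b. smooth (\<lambda>x. F x b)"
begin

lemma F_expand: "F x c = (\<Sum>l\<in>UNIV. c $ l *\<^sub>R F x (axis l 1))"
proof -
  have "F x c = F x (\<Sum>l\<in>UNIV. c $ l *\<^sub>R axis l 1)" using vec_expand[of c] by simp
  also have "\<dots> = (\<Sum>l\<in>UNIV. c $ l *\<^sub>R F x (axis l 1))"
    using linF by (simp only: linear_sum linear_scale)
  finally show ?thesis .
qed

lemma lp_DD: "DD (\<lambda>x. F x c) y w = (\<Sum>l\<in>UNIV. c $ l *\<^sub>R DD (\<lambda>x. F x (axis l 1)) y w)"
proof -
  have "DD (\<lambda>x. F x c) y w = DD (\<lambda>x. \<Sum>l\<in>UNIV. c $ l *\<^sub>R F x (axis l 1)) y w"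
    by (subst F_expand) (rule refl)
  also have "\<dots> = (\<Sum>l\<in>UNIV. DD (\<lambda>x. c $ l *\<^sub>R F x (axis l 1)) y w)"
    by (rule DD_sum) (auto intro: smooth_scaleR smF)
  also have "\<dots> = (\<Sum>l\<in>UNIV. c $ l *\<^sub>R DD (\<lambda>x. F x (axis l 1)) y w)"
    by (rule sum.cong[OF refl]) (simp add: DD_scaleR[OF smooth_const smF] DD_const)
  finally show ?thesis .
qed

lemma lp_linear: "linear (\<lambda>c. DD (\<lambda>x. F x c) y w)"
proof -
  have eq: "(\<lambda>c. DD (\<lambda>x. F x c) y w) = (\<lambda>c. \<Sum>l\<in>UNIV. c $ l *\<^sub>R DD (\<lambda>x. F x (axis l 1)) y w)"
    by (rule ext) (rule lp_DD)
  show ?thesis unfolding eq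
    by (rule linearI) (auto simp: sum.distrib scaleR_add_left scaleR_sum_right)
qed

lemma lp_smooth: "smooth a \<Longrightarrow> smooth (\<lambda>x. F x (a x))"
  by (subst F_expand) (auto intro!: smooth_sum smooth_scaleR smooth_vec_nth smF)

lemma lp_DD_app:
  assumes a: "smooth a"
  shows "DD (\<lambda>x. F x (a x)) y w = DD (\<lambda>x. F x (a y)) y w + F y (DD a y w)"
proof -
  have "DD (\<lambda>x. F x (a x)) y w = DD (\<lambda>x. \<Sum>l\<in>UNIV. a x $ l *\<^sub>R F x (axis l 1)) y w"
    by (subst F_expand) (rule refl)
  also have "\<dots> = (\<Sum>l\<in>UNIV. DD (\<lambda>x. a x $ l *\<^sub>R F x (axis l 1)) y w)"
    by (rule DD_sum, simp, rule smooth_scaleR[OF smooth_vec_nth[OF a] smF])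
  also have "\<dots> = (\<Sum>l\<in>UNIV. a y $ l *\<^sub>R DD (\<lambda>x. F x (axis l 1)) y w + DD a y w $ l *\<^sub>R F y (axis l 1))"
    by (rule sum.cong[OF refl]) (simp add: DD_scaleR[OF smooth_vec_nth[OF a] smF] DD_nth[OF a])
  also have "\<dots> = DD (\<lambda>x. F x (a y)) y w + F y (DD a y w)"
    by (simp add: sum.distrib lp_DD[of "a y" y w] F_expand[of y "DD a y w"])
  finally show ?thesis .
qed

end

lemma DD_bilinear:
  fixes B :: "real^'n \<Rightarrow> real^'n \<Rightarrow> real^'n"
  assumes "\<And>p. linear (B p)" "\<And>q. linear (\<lambda>p. B p q)" "smooth f" "smooth g"
  shows "DD (\<lambda>x. B (f x) (g x)) x w = B (f x) (DD g x w) + B (DD f x w) (g x)"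
proof -
  have "bilinear B" unfolding bilinear_def using assms(1,2) by auto
  then have bb: "bounded_bilinear B" using bilinear_conv_bounded_bilinear by blast
  show ?thesis
    by (rule DD_eqI) (rule bounded_bilinear.FDERIV[OF bb smooth_deriv[OF assms(3)] smooth_deriv[OF assms(4)]])
qed


context carn
begin

definition A :: "real^'n \<Rightarrow> real^'n \<Rightarrow> real^'n" where "A x w = Dr x 0 w"

lemma smooth_gmul_left: "smooth (gmul c)"
  using smooth_gmul[OF smooth_const smooth_id] by simp

lemma smooth_gmul_right: "smooth (\<lambda>x. gmul x c)"
  using smooth_gmul[OF smooth_id smooth_const] by simp

lemma smooth_A: "smooth (\<lambda>x. A x w)"
  unfolding A_def by (rule smooth_Dr[OF smooth_id smooth_const])

lemma linear_A: "linear (A x)"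
proof -
  have "A x = Dr x 0" by (simp add: A_def fun_eq_iff)
  then show ?thesis using linear_Dr by simp
qed

lemma A0[simp]: "A 0 w = w" unfolding A_def by simp

lemma lvf_eq: "lvf gmul w x = A x w"
  unfolding lvf_def A_def Dr_def ..

lemma br_eq: "lie_br gmul u v = DD (\<lambda>x. A x v) 0 u - DD (\<lambda>x. A x u) 0 v"
proof -
  have "lvf gmul v = (\<lambda>x. A x v)" for v by (simp add: fun_eq_iff lvf_eq)
  then show ?thesis unfolding lie_br_def by (simp add: lvf_eq)
qed

lemma Dl_zero[simp]: "Dl x y 0 = 0" using linear_0[OF linear_Dl] .
lemma Dr_zero[simp]: "Dr x y 0 = 0" using linear_0[OF linear_Dr] .

lemma DD_gmul_left:
  assumes "smooth g"
  shows "DD (\<lambda>x. gmul c (g x)) x w = Dr c (g x) (DD g x w)"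
  using DD_gmul[OF smooth_const assms] by (simp add: DD_const)

lemma DD_gmul_right:
  assumes "smooth f"
  shows "DD (\<lambda>x. gmul (f x) c) x w = Dl (f x) c (DD f x w)"
  using DD_gmul[OF assms smooth_const] by (simp add: DD_const)

lemma hom_bracket:
  fixes \<phi> :: "real^'n \<Rightarrow> real^'n"
  assumes sm: "smooth \<phi>" and z: "\<phi> 0 = 0" and hom: "\<And>x y. \<phi> (gmul x y) = gmul (\<phi> x) (\<phi> y)"
  shows "DD \<phi> 0 (lie_br gmul u v) = lie_br gmul (DD \<phi> 0 u) (DD \<phi> 0 v)"
proof -
  have a: "DD \<phi> x (A x v) = A (\<phi> x) (DD \<phi> 0 v)" for x v
  proof -
    have "DD (\<lambda>y. \<phi> (gmul x y)) 0 v = DD \<phi> (gmul x 0) (DD (gmul x) 0 v)"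
      by (rule DD_comp[OF sm smooth_gmul_left])
    also have "\<dots> = DD \<phi> x (A x v)" by (simp add: A_def Dr_def)
    finally have 1: "DD (\<lambda>y. \<phi> (gmul x y)) 0 v = DD \<phi> x (A x v)" .
    have "DD (\<lambda>y. gmul (\<phi> x) (\<phi> y)) 0 v = Dr (\<phi> x) (\<phi> 0) (DD \<phi> 0 v)"
      by (rule DD_gmul_left[OF sm])
    also have "\<dots> = A (\<phi> x) (DD \<phi> 0 v)" by (simp add: A_def z)
    finally have 2: "DD (\<lambda>y. gmul (\<phi> x) (\<phi> y)) 0 v = A (\<phi> x) (DD \<phi> 0 v)" .
    show ?thesis using 1 2 hom by simp
  qed
  have lin: "linear (DD \<phi> x)" for x by (rule linear_DD[OF sm])
  have b: "DD (\<lambda>y. DD \<phi> y v) 0 u + DD \<phi> 0 (DD (\<lambda>x. A x v) 0 u)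
           = DD (\<lambda>y. A y (DD \<phi> 0 v)) 0 (DD \<phi> 0 u)" for u v
  proof -
    have "DD (\<lambda>x. DD \<phi> x (A x v)) 0 u = DD (\<lambda>x. DD \<phi> x (A 0 v)) 0 u + DD \<phi> 0 (DD (\<lambda>x. A x v) 0 u)"
      by (rule lp_DD_app[OF lin smooth_DD[OF sm] smooth_A])
    moreover have "DD (\<lambda>x. A (\<phi> x) (DD \<phi> 0 v)) 0 u = DD (\<lambda>y. A y (DD \<phi> 0 v)) (\<phi> 0) (DD \<phi> 0 u)"
      by (rule DD_comp[OF smooth_A sm])
    ultimately show ?thesis using a z by simp
  qed
  have s: "DD (\<lambda>y. DD \<phi> y v) 0 u = DD (\<lambda>y. DD \<phi> y u) 0 v" by (rule sym2[OF sm])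
  have "DD \<phi> 0 (lie_br gmul u v) = DD \<phi> 0 (DD (\<lambda>x. A x v) 0 u) - DD \<phi> 0 (DD (\<lambda>x. A x u) 0 v)"
    unfolding br_eq by (rule linear_diff[OF lin])
  also have "\<dots> = DD (\<lambda>y. A y (DD \<phi> 0 v)) 0 (DD \<phi> 0 u) - DD (\<lambda>y. A y (DD \<phi> 0 u)) 0 (DD \<phi> 0 v)"
  proof -
    have e1: "DD \<phi> 0 (DD (\<lambda>x. A x v) 0 u) = DD (\<lambda>y. A y (DD \<phi> 0 v)) 0 (DD \<phi> 0 u) - DD (\<lambda>y. DD \<phi> y v) 0 u"
      using b[of v u] by (simp add: eq_diff_eq add.commute)
    have e2: "DD \<phi> 0 (DD (\<lambda>x. A x u) 0 v) = DD (\<lambda>y. A y (DD \<phi> 0 u)) 0 (DD \<phi> 0 v) - DD (\<lambda>y. DD \<phi> y u) 0 v"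
      using b[of u v] by (simp add: eq_diff_eq add.commute)
    show ?thesis unfolding e1 e2 s by simp
  qed
  also have "\<dots> = lie_br gmul (DD \<phi> 0 u) (DD \<phi> 0 v)" unfolding br_eq ..
  finally show ?thesis .
qed

end


lemma linear_sub_fun: "linear f \<Longrightarrow> linear g \<Longrightarrow> linear (\<lambda>x. f x - g x)"
  by (rule linearI) (auto simp: linear_add linear_scale algebra_simps)

context carn
begin

definition CC :: "(real^'n) \<times> (real^'n) \<Rightarrow> real^'n" where
  "CC q = gmul (gmul (fst q) (snd q)) (- fst q)"

lemma smooth_CC: "smooth CC"
  unfolding CC_def by (intro smooth_gmul smooth_fst smooth_snd smooth_minus)

definition Ad :: "real^'n \<Rightarrow> real^'n \<Rightarrow> real^'n" where
  "Ad g z = DD (\<lambda>y. gmul (gmul g y) (- g)) 0 z"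

lemma Ad_eq: "Ad g z = DD CC (g, 0) (0, z)"
proof -
  have "DD (\<lambda>y. CC (g, y)) 0 z = DD CC (g, 0) (0, z)" by (rule DD_partial2[OF smooth_CC])
  then show ?thesis unfolding Ad_def CC_def by simp
qed

lemma smooth_Ad: "smooth f \<Longrightarrow> smooth (\<lambda>h. Ad (f h) z)"
  unfolding Ad_eq using smooth_comp[OF smooth_DD[OF smooth_CC] smooth_pair[OF _ smooth_const]] by blast

lemma smooth_conj: "smooth (\<lambda>y. gmul (gmul g y) (- g))"
  by (intro smooth_gmul smooth_const smooth_id)

lemma linear_Ad: "linear (Ad g)"
proof -
  have "Ad g = DD (\<lambda>y. gmul (gmul g y) (- g)) 0" by (simp add: Ad_def fun_eq_iff)
  then show ?thesis using linear_DD[OF smooth_conj] by simp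
qed

lemma Ad_hom: "Ad g (lie_br gmul u w) = lie_br gmul (Ad g u) (Ad g w)"
proof -
  have "DD (\<lambda>y. gmul (gmul g y) (- g)) 0 (lie_br gmul u w) =
        lie_br gmul (DD (\<lambda>y. gmul (gmul g y) (- g)) 0 u) (DD (\<lambda>y. gmul (gmul g y) (- g)) 0 w)"
    by (rule hom_bracket[OF smooth_conj]) (simp_all add: assoc cancel_left)
  then show ?thesis unfolding Ad_def .
qed

lemma Ad0: "Ad 0 z = z"
  unfolding Ad_def by (simp add: DD_id)

definition adj :: "real^'n \<Rightarrow> real^'n \<Rightarrow> real^'n" where
  "adj v z = DD (\<lambda>h::real. Ad (h *\<^sub>R v) z) 0 1"

lemma smooth_hv: "smooth (\<lambda>h::real. h *\<^sub>R v)"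
  by (intro smooth_scaleR smooth_id smooth_const)

lemma adj_br: "adj v z = lie_br gmul v z"
proof -
  have s1: "smooth (\<lambda>q. DD CC q (0, z))" by (rule smooth_DD[OF smooth_CC])
  have s2: "smooth (\<lambda>q. DD CC q (v, 0))" by (rule smooth_DD[OF smooth_CC])
  have sMU: "smooth MU" by (rule smooth_mu)
  have "adj v z = DD (\<lambda>h. DD CC (h *\<^sub>R v, 0) (0, z)) 0 1"
    unfolding adj_def Ad_eq ..
  also have "\<dots> = DD (\<lambda>q. DD CC q (0, z)) (0 *\<^sub>R v, 0) (DD (\<lambda>h::real. (h *\<^sub>R v, 0::real^'n)) 0 1)"
    by (rule DD_comp[OF s1 smooth_pair[OF smooth_hv smooth_const]])
  also have "DD (\<lambda>h::real. (h *\<^sub>R v, 0::real^'n)) 0 1 = (v, 0)"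
  proof -
    have "((\<lambda>h::real. (h *\<^sub>R v, 0::real^'n)) has_derivative (\<lambda>h. (h *\<^sub>R v, 0))) (at 0)"
      by (auto intro!: derivative_eq_intros)
    from DD_eqI[OF this, of 1] show ?thesis by simp
  qed
  also have "DD (\<lambda>q. DD CC q (0, z)) (0 *\<^sub>R v, 0) (v, 0) = DD (\<lambda>q. DD CC q (v, 0)) (0, 0) (0, z)"
    using sym2[OF smooth_CC] by simp
  also have "\<dots> = DD (\<lambda>y. DD CC (0, y) (v, 0)) 0 z"
    by (rule DD_partial2[OF s2, symmetric])
  also have "(\<lambda>y. DD CC (0, y) (v, 0)) = (\<lambda>y. Dl 0 y v - A y v)"
  proof (rule ext)
    fix y
    have "DD CC (0, y) (v, 0) = DD (\<lambda>g. CC (g, y)) 0 v"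
      by (rule DD_partial1[OF smooth_CC, symmetric])
    also have "\<dots> = DD (\<lambda>g. gmul (gmul g y) (- g)) 0 v" unfolding CC_def by simp
    also have "\<dots> = Dl (gmul 0 y) (- 0) (DD (\<lambda>g. gmul g y) 0 v) + Dr (gmul 0 y) (- 0) (DD (\<lambda>g. - g) 0 v)"
      by (rule DD_gmul[OF smooth_gmul_right smooth_minus[OF smooth_id]])
    also have "\<dots> = Dl 0 y v - A y v"
      using linear_neg[OF linear_Dr]
      by (simp add: DD_minus[OF smooth_id] DD_id A_def Dl_def[symmetric])
    finally show "DD CC (0, y) (v, 0) = Dl 0 y v - A y v" .
  qed
  also have "DD (\<lambda>y. Dl 0 y v - A y v) 0 z = DD (\<lambda>y. Dl 0 y v) 0 z - DD (\<lambda>y. A y v) 0 z"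
    by (rule DD_diff[OF smooth_Dl[OF smooth_const smooth_id] smooth_A])
  also have "DD (\<lambda>y. Dl 0 y v) 0 z = DD (\<lambda>x. A x z) 0 v"
  proof -
    have "DD (\<lambda>y. Dl 0 y v) 0 z = DD (\<lambda>y. DD MU (0, y) (v, 0)) 0 z" unfolding Dl_eq ..
    also have "\<dots> = DD (\<lambda>q. DD MU q (v, 0)) (0, 0) (0, z)"
      by (rule DD_partial2[OF smooth_DD[OF sMU]])
    also have "\<dots> = DD (\<lambda>q. DD MU q (0, z)) (0, 0) (v, 0)"
      by (rule sym2[OF sMU])
    also have "\<dots> = DD (\<lambda>x. DD MU (x, 0) (0, z)) 0 v"
      by (rule DD_partial1[OF smooth_DD[OF sMU], symmetric])
    also have "\<dots> = DD (\<lambda>x. A x z) 0 v" unfolding A_def Dr_eq ..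
    finally show ?thesis .
  qed
  finally show ?thesis unfolding br_eq .
qed

lemma lin_br1: "linear (\<lambda>p. lie_br gmul p q)"
  unfolding br_eq
  by (rule linear_sub_fun[OF linear_DD[OF smooth_A] lp_linear[OF linear_A smooth_A]])

lemma lin_br2: "linear (lie_br gmul p)"
proof -
  have "lie_br gmul p = (\<lambda>q. DD (\<lambda>x. A x q) 0 p - DD (\<lambda>x. A x p) 0 q)" by (simp add: br_eq fun_eq_iff)
  then show ?thesis
    using linear_sub_fun[OF lp_linear[OF linear_A smooth_A] linear_DD[OF smooth_A]] by simp
qed

lemma derivation: "adj v (lie_br gmul u w) = lie_br gmul (adj v u) w + lie_br gmul u (adj v w)"
proof -
  have "adj v (lie_br gmul u w) = DD (\<lambda>h::real. lie_br gmul (Ad (h *\<^sub>R v) u) (Ad (h *\<^sub>R v) w)) 0 1"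
    unfolding adj_def Ad_hom ..
  also have "\<dots> = lie_br gmul (Ad (0 *\<^sub>R v) u) (DD (\<lambda>h::real. Ad (h *\<^sub>R v) w) 0 1)
                 + lie_br gmul (DD (\<lambda>h::real. Ad (h *\<^sub>R v) u) 0 1) (Ad (0 *\<^sub>R v) w)"
    by (rule DD_bilinear[OF lin_br2 lin_br1 smooth_Ad[OF smooth_hv] smooth_Ad[OF smooth_hv]])
  also have "\<dots> = lie_br gmul (adj v u) w + lie_br gmul u (adj v w)"
    by (simp add: Ad0 adj_def)
  finally show ?thesis .
qed

lemma jacobi: "lie_br gmul v (lie_br gmul u w) = lie_br gmul (lie_br gmul v u) w + lie_br gmul u (lie_br gmul v w)"
  using derivation[of v u w] by (simp add: adj_br)

end


context carn
begin

definition Wd :: "nat \<Rightarrow> (real^'n) set" where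
  "Wd d = {z. \<forall>i. deg i < d \<longrightarrow> z $ i = 0}"

lemma subspace_Wd: "subspace (Wd d)"
  unfolding subspace_def Wd_def by auto

lemma Wd_mono: "d \<le> d' \<Longrightarrow> Wd d' \<subseteq> Wd d"
  unfolding Wd_def by auto

lemma axis_layer: "axis a 1 \<in> layer deg (deg a)"
  unfolding layer_def by (rule span_base) auto

lemma layer_Wd: "layer deg k \<subseteq> Wd k"
  unfolding layer_def
  by (rule span_minimal[OF _ subspace_Wd]) (auto simp: Wd_def axis_nth_if)

definition Gp :: "real^'n \<Rightarrow> bool" where
  "Gp x \<longleftrightarrow> (\<forall>d z. z \<in> Wd d \<longrightarrow> lie_br gmul x z \<in> Wd (Suc d))"

lemma subspace_Gp: "subspace {x. Gp x}"
proof -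
  have l: "linear (\<lambda>p. lie_br gmul p q)" for q by (rule lin_br1)
  show ?thesis
    unfolding subspace_def Gp_def
    using linear_0[OF l] linear_add[OF l] linear_scale[OF l]
    by (auto intro: subspace_0[OF subspace_Wd] subspace_add[OF subspace_Wd] subspace_mul[OF subspace_Wd])
qed

lemma Gp_span: "S \<subseteq> {x. Gp x} \<Longrightarrow> span S \<subseteq> {x. Gp x}"
  by (rule span_minimal[OF _ subspace_Gp])

lemma Gp_base:
  assumes "deg a = 1"
  shows "Gp (axis a 1)"
  unfolding Gp_def
proof (intro allI impI)
  fix d and z :: "real^'n"
  assume z: "z \<in> Wd d"
  have "lie_br gmul (axis a 1) z = lie_br gmul (axis a 1) (\<Sum>l\<in>UNIV. z $ l *\<^sub>R axis l 1)"
    using vec_expand[of z] by simp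
  also have "\<dots> = (\<Sum>l\<in>UNIV. z $ l *\<^sub>R lie_br gmul (axis a 1) (axis l 1))"
    using lin_br2 by (simp only: linear_sum linear_scale)
  also have "\<dots> \<in> Wd (Suc d)"
  proof (rule subspace_sum[OF subspace_Wd])
    fix l
    show "z $ l *\<^sub>R lie_br gmul (axis a 1) (axis l 1) \<in> Wd (Suc d)"
    proof (cases "deg l < d")
      case True
      then have "z $ l = 0" using z by (simp add: Wd_def)
      then show ?thesis using subspace_0[OF subspace_Wd] by simp
    next
      case False
      have "lie_br gmul (axis a 1) (axis l 1) \<in> span {lie_br gmul u v | u v. u \<in> layer deg 1 \<and> v \<in> layer deg (deg l)}"
        by (rule span_base) (use axis_layer[of a] axis_layer[of l] assms in auto)
      also have "\<dots> = layer deg (deg l + 1)" by (rule strat[OF deg_ge1])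
      also have "\<dots> \<subseteq> Wd (deg l + 1)" by (rule layer_Wd)
      also have "\<dots> \<subseteq> Wd (Suc d)" using False by (intro Wd_mono) simp
      finally show ?thesis by (rule subspace_mul[OF subspace_Wd])
    qed
  qed
  finally show "lie_br gmul (axis a 1) z \<in> Wd (Suc d)" .
qed

lemma Gp_layer: "n \<ge> 1 \<Longrightarrow> layer deg n \<subseteq> {x. Gp x}"
proof (induction n)
  case 0 then show ?case by simp
next
  case (Suc n)
  show ?case
  proof (cases "n = 0")
    case True
    then show ?thesis unfolding layer_def
      by (intro Gp_span) (auto intro: Gp_base)
  next
    case False
    then have n1: "n \<ge> 1" by simp
    have IH: "layer deg n \<subseteq> {x. Gp x}" using Suc.IH n1 by simp
    have L1: "layer deg 1 \<subseteq> {x. Gp x}" unfolding layer_def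
      by (intro Gp_span) (auto intro: Gp_base)
    have "layer deg (Suc n) = span {lie_br gmul u v | u v. u \<in> layer deg 1 \<and> v \<in> layer deg n}"
      using strat[OF n1] by simp
    also have "\<dots> \<subseteq> {x. Gp x}"
    proof (rule Gp_span, safe)
      fix u v assume u: "u \<in> layer deg 1" and v: "v \<in> layer deg n"
      have Gu: "Gp u" and Gv: "Gp v" using u v IH L1 by auto
      show "Gp (lie_br gmul u v)" unfolding Gp_def
      proof (intro allI impI)
        fix d and z :: "real^'n" assume z: "z \<in> Wd d"
        have j: "lie_br gmul (lie_br gmul u v) z = lie_br gmul u (lie_br gmul v z) - lie_br gmul v (lie_br gmul u z)"
          using jacobi[of u v z] by (simp add: algebra_simps)
        have "lie_br gmul v z \<in> Wd (Suc d)" "lie_br gmul u z \<in> Wd (Suc d)" using Gu Gv z by (auto simp: Gp_def)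
        then have "lie_br gmul u (lie_br gmul v z) \<in> Wd (Suc (Suc d))" "lie_br gmul v (lie_br gmul u z) \<in> Wd (Suc (Suc d))"
          using Gu Gv by (auto simp: Gp_def)
        then have "lie_br gmul u (lie_br gmul v z) \<in> Wd (Suc d)" "lie_br gmul v (lie_br gmul u z) \<in> Wd (Suc d)"
          using Wd_mono[of "Suc d" "Suc (Suc d)"] by auto
        then show "lie_br gmul (lie_br gmul u v) z \<in> Wd (Suc d)"
          unfolding j by (rule subspace_diff[OF subspace_Wd])
      qed
    qed
    finally show ?thesis .
  qed
qed

lemma Gp_all: "Gp x"
proof -
  have "Gp (axis a 1)" for a using Gp_layer[OF deg_ge1[of a]] axis_layer[of a] by auto
  then have "x \<in> {x. Gp x}"
    using vec_expand[of x] subspace_sum[OF subspace_Gp] subspace_mul[OF subspace_Gp]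
    by (metis (no_types, lifting) mem_Collect_eq)
  then show ?thesis by simp
qed

lemma br_raise: "z \<in> Wd d \<Longrightarrow> lie_br gmul x z \<in> Wd (Suc d)"
  using Gp_all unfolding Gp_def by blast

end


lemma DD_real_scale:
  fixes \<phi> :: "real \<Rightarrow> 'b::real_normed_vector"
  assumes "smooth \<phi>"
  shows "DD \<phi> s h = h *\<^sub>R DD \<phi> s 1"
proof -
  have "DD \<phi> s (h *\<^sub>R 1) = h *\<^sub>R DD \<phi> s 1" by (rule linear_scale[OF linear_DD[OF assms]])
  then show ?thesis by simp
qed

lemma smooth_times: "smooth (\<lambda>x::real. x * c)"
  using smooth_scaleR[OF smooth_id smooth_const, of c] by simp

lemma deriv_zero_const:
  fixes \<phi> :: "real \<Rightarrow> real"
  assumes sm: "smooth \<phi>" and z: "\<And>s. DD \<phi> s 1 = 0"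
  shows "\<phi> s = \<phi> 0"
proof -
  have "(\<phi> has_derivative (\<lambda>h. 0)) (at x within UNIV)" for x
  proof -
    have "DD \<phi> x = (\<lambda>h. 0)" using DD_real_scale[OF sm, of x] z by (auto simp: fun_eq_iff)
    then show ?thesis using smooth_deriv[OF sm, of x] by simp
  qed
  then show ?thesis using has_derivative_zero_unique[of UNIV \<phi> s 0] by auto
qed

context carn
begin

definition Binv :: "real^'n \<Rightarrow> real^'n \<Rightarrow> real^'n" where "Binv x = Dr (- x) x"

definition FF :: "real^'n \<Rightarrow> real^'n \<Rightarrow> real \<Rightarrow> real^'n" where
  "FF v w s = s *\<^sub>R Dr (- (s *\<^sub>R v)) (s *\<^sub>R v) w"

lemma smooth_FF: "smooth (FF v w)"
proof -
  have "smooth (\<lambda>s. s *\<^sub>R Dr (- (s *\<^sub>R v)) (s *\<^sub>R v) w)"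
    by (intro smooth_scaleR smooth_id smooth_Dr smooth_minus smooth_hv)
  then show ?thesis unfolding FF_def by (simp add: fun_eq_iff)
qed

lemma FF_DD: "FF v w s = DD (\<lambda>t::real. gmul (- (s *\<^sub>R v)) (s *\<^sub>R (v + t *\<^sub>R w))) 0 1"
proof -
  have sg: "smooth (\<lambda>t::real. s *\<^sub>R (v + t *\<^sub>R w))"
    by (intro smooth_scaleR smooth_const smooth_add smooth_id)
  have dg: "DD (\<lambda>t::real. s *\<^sub>R (v + t *\<^sub>R w)) 0 1 = s *\<^sub>R w"
  proof -
    have "((\<lambda>t::real. s *\<^sub>R (v + t *\<^sub>R w)) has_derivative (\<lambda>t. s *\<^sub>R (t *\<^sub>R w))) (at 0)"
      by (auto intro!: derivative_eq_intros)
    from DD_eqI[OF this, of 1] show ?thesis by simp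
  qed
  have "DD (\<lambda>t::real. gmul (- (s *\<^sub>R v)) (s *\<^sub>R (v + t *\<^sub>R w))) 0 1
        = Dr (- (s *\<^sub>R v)) (s *\<^sub>R (v + 0 *\<^sub>R w)) (s *\<^sub>R w)"
    using DD_gmul_left[OF sg, of "- (s *\<^sub>R v)" 0 1] dg by simp
  also have "\<dots> = FF v w s"
    unfolding FF_def using linear_scale[OF linear_Dr] by simp
  finally show ?thesis by simp
qed

lemma FF_funeq: "FF v w (s + h) = Ad (- (h *\<^sub>R v)) (FF v w s) + FF v w h"
proof -
  define Y where "Y = (\<lambda>t::real. gmul (- (s *\<^sub>R v)) (s *\<^sub>R (v + t *\<^sub>R w)))"
  define Z where "Z = (\<lambda>t::real. gmul (- (h *\<^sub>R v)) (h *\<^sub>R (v + t *\<^sub>R w)))"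
  define P where "P = (\<lambda>t. gmul (gmul (- (h *\<^sub>R v)) (Y t)) (h *\<^sub>R v))"
  have sY: "smooth Y" unfolding Y_def
    by (intro smooth_gmul smooth_scaleR smooth_const smooth_add smooth_id)
  have sZ: "smooth Z" unfolding Z_def
    by (intro smooth_gmul smooth_scaleR smooth_const smooth_add smooth_id)
  have sP: "smooth P" unfolding P_def
    by (intro smooth_gmul smooth_const sY)
  have ident: "gmul (- ((s + h) *\<^sub>R v)) ((s + h) *\<^sub>R (v + t *\<^sub>R w)) = gmul (P t) (Z t)" for t
  proof -
    have 1: "(s + h) *\<^sub>R (v + t *\<^sub>R w) = gmul (s *\<^sub>R (v + t *\<^sub>R w)) (h *\<^sub>R (v + t *\<^sub>R w))"
      by (rule oneparam[symmetric])
    have 2: "- ((s + h) *\<^sub>R v) = gmul (- (h *\<^sub>R v)) (- (s *\<^sub>R v))"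
      using oneparam[of "- h" v "- s"] by (simp add: algebra_simps)
    show ?thesis unfolding 1 2 P_def Y_def Z_def by (simp add: assoc cancel_left2)
  qed
  have Y0: "Y 0 = 0" unfolding Y_def by simp
  have Z0: "Z 0 = 0" unfolding Z_def by simp
  have P0: "P 0 = 0" unfolding P_def Y0 by simp
  have "FF v w (s + h) = DD (\<lambda>t. gmul (P t) (Z t)) 0 1"
    unfolding FF_DD ident ..
  also have "\<dots> = Dl (P 0) (Z 0) (DD P 0 1) + Dr (P 0) (Z 0) (DD Z 0 1)"
    by (rule DD_gmul[OF sP sZ])
  also have "\<dots> = DD P 0 1 + DD Z 0 1" unfolding P0 Z0 by simp
  also have "DD Z 0 1 = FF v w h" unfolding Z_def FF_DD ..
  also have "DD P 0 1 = Ad (- (h *\<^sub>R v)) (FF v w s)"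
  proof -
    have e: "DD (\<lambda>t. gmul (gmul (- (h *\<^sub>R v)) (Y t)) (- (- (h *\<^sub>R v)))) 0 1 = DD (\<lambda>y. gmul (gmul (- (h *\<^sub>R v)) y) (- (- (h *\<^sub>R v)))) (Y 0) (DD Y 0 1)"
      by (rule DD_comp[OF smooth_conj sY])
    have "DD Y 0 1 = FF v w s" unfolding Y_def FF_DD ..
    then show ?thesis using e unfolding Y0 Ad_def P_def by simp
  qed
  finally show ?thesis .
qed

lemma FF_deriv: "DD (FF v w) s 1 = w - adj v (FF v w s)"
proof -
  define c where "c = FF v w s"
  define G where "G = (\<lambda>h. Ad ((- h) *\<^sub>R v) c + FF v w h)"
  have sneg: "smooth (\<lambda>h::real. (- h) *\<^sub>R v)" by (intro smooth_scaleR smooth_minus smooth_id smooth_const)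
  have sG: "smooth G" unfolding G_def by (intro smooth_add smooth_Ad sneg smooth_FF)
  have eq: "FF v w = (\<lambda>\<sigma>. G (\<sigma> - s))"
  proof (rule ext)
    fix \<sigma>
    show "FF v w \<sigma> = G (\<sigma> - s)"
      using FF_funeq[of v w s "\<sigma> - s"] by (simp add: G_def c_def)
  qed
  have "DD (FF v w) s 1 = DD (\<lambda>\<sigma>. G (\<sigma> - s)) s 1" unfolding eq ..
  also have "\<dots> = DD G (s - s) (DD (\<lambda>\<sigma>. \<sigma> - s) s 1)"
    by (rule DD_comp[OF sG smooth_diff[OF smooth_id smooth_const]])
  also have "\<dots> = DD G 0 1" by (simp add: DD_diff[OF smooth_id smooth_const] DD_id DD_const)
  also have "\<dots> = DD (\<lambda>h. Ad ((- h) *\<^sub>R v) c) 0 1 + DD (FF v w) 0 1"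
    unfolding G_def by (rule DD_add[OF smooth_Ad[OF sneg] smooth_FF])
  also have "DD (\<lambda>h. Ad ((- h) *\<^sub>R v) c) 0 1 = - adj v c"
  proof -
    have "DD (\<lambda>h. Ad ((- h) *\<^sub>R v) c) 0 1 = DD (\<lambda>h. Ad (h *\<^sub>R v) c) (- 0) (DD (\<lambda>h::real. - h) 0 1)"
      by (rule DD_comp[OF smooth_Ad[OF smooth_hv] smooth_minus[OF smooth_id]])
    also have "\<dots> = DD (\<lambda>h. Ad (h *\<^sub>R v) c) 0 (- 1)" by (simp add: DD_minus[OF smooth_id] DD_id)
    also have "\<dots> = - adj v c" unfolding adj_def
      using linear_neg[OF linear_DD[OF smooth_Ad[OF smooth_hv]]] by metis
    finally show ?thesis .
  qed
  also have "DD (FF v w) 0 1 = w"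
  proof -
    have "FF v w = (\<lambda>s. s *\<^sub>R Dr (- (s *\<^sub>R v)) (s *\<^sub>R v) w)" by (simp add: FF_def fun_eq_iff)
    moreover have "smooth (\<lambda>s::real. Dr (- (s *\<^sub>R v)) (s *\<^sub>R v) w)"
      by (intro smooth_Dr smooth_minus smooth_hv)
    ultimately show ?thesis
      using DD_scaleR[OF smooth_id, of "\<lambda>s. Dr (- (s *\<^sub>R v)) (s *\<^sub>R v) w" 0 1] by (simp add: DD_id)
  qed
  finally show ?thesis unfolding c_def by simp
qed

lemma FF_coord:
  assumes ki: "deg k \<le> deg i"
  shows "FF v (axis i 1) s $ k = s * (if k = i then 1 else 0)"
proof -
  have "\<forall>k. deg k = n \<longrightarrow> deg k \<le> deg i \<longrightarrow> (\<forall>s. FF v (axis i 1) s $ k = s * (if k = i then 1 else 0))" for n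
  proof (induction n rule: less_induct)
    case (less n)
    show ?case
    proof (intro allI impI)
      fix k s assume kn: "deg k = n" and ki: "deg k \<le> deg i"
      have inW: "FF v (axis i 1) s \<in> Wd (deg k)" for s
        unfolding Wd_def
      proof (intro CollectI allI impI)
        fix l assume "deg l < deg k"
        then have "l \<noteq> i" "deg l < n" "deg l \<le> deg i" using ki kn by auto
        then show "FF v (axis i 1) s $ l = 0" using less.IH[of "deg l"] by auto
      qed
      have adj0: "adj v (FF v (axis i 1) s) $ k = 0" for s
        using br_raise[OF inW[of s], of v] unfolding adj_br Wd_def by auto
      define \<phi> where "\<phi> = (\<lambda>s. FF v (axis i 1) s $ k - s * (if k = i then 1 else 0))"
      have s\<phi>: "smooth \<phi>" unfolding \<phi>_def
        by (intro smooth_diff smooth_vec_nth smooth_FF smooth_times)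
      have "DD \<phi> s 1 = 0" for s
      proof -
        have "DD \<phi> s 1 = DD (\<lambda>s. FF v (axis i 1) s $ k) s 1 - DD (\<lambda>s. s * (if k = i then 1 else 0)) s 1"
          unfolding \<phi>_def
          by (rule DD_diff[OF smooth_vec_nth[OF smooth_FF]])
             (intro smooth_times)
        also have "DD (\<lambda>s. s * (if k = i then 1 else 0)) s 1 = (if k = i then 1 else 0)"
        proof -
          have "((\<lambda>s::real. s * (if k = i then 1 else 0)) has_derivative (\<lambda>h. h * (if k = i then 1 else 0))) (at s)"
            by (auto intro!: derivative_eq_intros)
          from DD_eqI[OF this, of 1] show ?thesis by simp
        qed
        also have "DD (\<lambda>s. FF v (axis i 1) s $ k) s 1 = (axis i 1 - adj v (FF v (axis i 1) s)) $ k"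
          using DD_nth[OF smooth_FF] FF_deriv by metis
        finally show ?thesis using adj0[of s] by (simp add: axis_nth_if)
      qed
      then have "\<phi> s = \<phi> 0" by (rule deriv_zero_const[OF s\<phi>])
      then show "FF v (axis i 1) s $ k = s * (if k = i then 1 else 0)"
        by (simp add: \<phi>_def FF_def)
    qed
  qed
  then show ?thesis using assms by blast
qed

lemma unip_Binv: "unip deg (Binv v)"
  unfolding unip_def
proof (intro allI impI)
  fix i k assume "deg k \<le> deg i"
  from FF_coord[OF this, of v 1] show "Binv v (axis i 1) $ k = (if k = i then 1 else 0)"
    by (simp add: FF_def Binv_def)
qed

end


context carn
begin

lemma linear_Binv: "linear (Binv x)" unfolding Binv_def by (rule linear_Dr)

lemma Binv_A: "Binv x (A x z) = z"
proof -
  have "DD (\<lambda>y. gmul (- x) (gmul x y)) 0 z = Dr (- x) (gmul x 0) (DD (gmul x) 0 z)"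
    by (rule DD_gmul_left[OF smooth_gmul_left])
  moreover have "(\<lambda>y. gmul (- x) (gmul x y)) = (\<lambda>y. y)" by (simp add: cancel_left fun_eq_iff)
  ultimately show ?thesis by (simp add: DD_id Binv_def A_def Dr_def)
qed

lemma A_Binv: "A x (Binv x z) = z"
proof -
  have "DD (\<lambda>y. gmul x (gmul (- x) y)) x z = Dr x (gmul (- x) x) (DD (gmul (- x)) x z)"
    by (rule DD_gmul_left[OF smooth_gmul_left])
  moreover have "(\<lambda>y. gmul x (gmul (- x) y)) = (\<lambda>y. y)" by (simp add: cancel_left2 fun_eq_iff)
  ultimately show ?thesis by (simp add: DD_id Binv_def A_def Dr_def)
qed

lemma unip_A: "unip deg (A x)"
  by (rule unip_inv[OF linear_Binv linear_A Binv_A unip_Binv])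

lemma Dr_decomp: "Dr a x z = A (gmul a x) (Binv x z)"
proof -
  have key: "Dr a x (A x z') = A (gmul a x) z'" for z'
  proof -
    have "DD (\<lambda>y. gmul a (gmul x y)) 0 z' = Dr a (gmul x 0) (DD (gmul x) 0 z')"
      by (rule DD_gmul_left[OF smooth_gmul_left])
    moreover have "(\<lambda>y. gmul a (gmul x y)) = gmul (gmul a x)" by (simp add: assoc fun_eq_iff)
    ultimately show ?thesis by (simp add: A_def Dr_def)
  qed
  show ?thesis using key[of "Binv x z"] by (simp add: A_Binv)
qed

lemma unip_Dr: "unip deg (Dr a x)"
proof -
  have "Dr a x = (\<lambda>z. A (gmul a x) (Binv x z))" by (simp add: fun_eq_iff Dr_decomp)
  then show ?thesis using unip_comp[OF linear_A linear_Binv unip_A unip_Binv] by simp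
qed

lemma Dl_eq_Dr: "Dl x a z = Dr (- a) (- x) z"
proof -
  have f: "(\<lambda>y. gmul y a) = (\<lambda>y. - gmul (- a) (- y))" by (simp add: inv_mul fun_eq_iff)
  have "DD (\<lambda>y. - gmul (- a) (- y)) x z = - DD (\<lambda>y. gmul (- a) (- y)) x z"
    by (rule DD_minus[OF smooth_gmul[OF smooth_const smooth_minus[OF smooth_id]]])
  also have "DD (\<lambda>y. gmul (- a) (- y)) x z = Dr (- a) (- x) (DD (\<lambda>y. - y) x z)"
    by (rule DD_gmul_left[OF smooth_minus[OF smooth_id]])
  also have "\<dots> = Dr (- a) (- x) (- z)" by (simp add: DD_minus[OF smooth_id] DD_id)
  also have "\<dots> = - Dr (- a) (- x) z" by (rule linear_neg[OF linear_Dr])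
  finally show ?thesis unfolding Dl_def f by simp
qed

lemma unip_Dl: "unip deg (Dl x a)"
proof -
  have "Dl x a = Dr (- a) (- x)" by (simp add: fun_eq_iff Dl_eq_Dr)
  then show ?thesis using unip_Dr by simp
qed

lemma Ad_decomp: "Ad g z = Dl g (- g) (A g z)"
proof -
  have "DD (\<lambda>y. gmul (gmul g y) (- g)) 0 z = Dl (gmul g 0) (- g) (DD (gmul g) 0 z)"
    by (rule DD_gmul_right[OF smooth_gmul_left])
  then show ?thesis by (simp add: Ad_def A_def Dr_def)
qed

lemma unip_Ad: "unip deg (Ad g)"
proof -
  have "Ad g = (\<lambda>z. Dl g (- g) (A g z))" by (simp add: fun_eq_iff Ad_decomp)
  then show ?thesis using unip_comp[OF linear_Dl linear_A unip_Dl unip_A] by simp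
qed

lemma deg1_min: "deg j = 1 \<Longrightarrow> deg j \<le> deg i" using deg_ge1[of i] by simp

lemma coord_add:
  assumes j: "deg j = 1"
  shows "gmul a x $ j = a $ j + x $ j"
proof -
  define \<phi> where "\<phi> = (\<lambda>x. gmul a x $ j - x $ j)"
  have s\<phi>: "smooth \<phi>" unfolding \<phi>_def by (intro smooth_diff smooth_vec_nth smooth_gmul_left smooth_id)
  have "(\<phi> has_derivative (\<lambda>h. 0)) (at y within UNIV)" for y
  proof -
    have "DD \<phi> y z = 0" for z
    proof -
      have "DD \<phi> y z = DD (\<lambda>x. gmul a x $ j) y z - DD (\<lambda>x. x $ j) y z"
        unfolding \<phi>_def by (rule DD_diff[OF smooth_vec_nth[OF smooth_gmul_left] smooth_vec_nth[OF smooth_id]])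
      also have "\<dots> = Dr a y z $ j - z $ j"
        by (simp add: DD_nth[OF smooth_gmul_left] DD_nth[OF smooth_id] DD_id Dr_def)
      also have "\<dots> = 0" using unip_coord[OF linear_Dr unip_Dr deg1_min[OF j]] by simp
      finally show ?thesis .
    qed
    then have "DD \<phi> y = (\<lambda>h. 0)" by (simp add: fun_eq_iff)
    then show ?thesis using smooth_deriv[OF s\<phi>, of y] by simp
  qed
  then have "\<phi> x = \<phi> 0" using has_derivative_zero_unique[of UNIV \<phi> x 0] by auto
  then show ?thesis by (simp add: \<phi>_def)
qed

end


lemma DD_ray: "DD (\<lambda>t::real. t *\<^sub>R c) 0 1 = c"
proof -
  have "((\<lambda>t::real. t *\<^sub>R c) has_derivative (\<lambda>t. t *\<^sub>R c)) (at 0)"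
    by (auto intro!: derivative_eq_intros)
  from DD_eqI[OF this, of 1] show ?thesis by simp
qed

lemma smooth_on_UNIV: "smooth F \<Longrightarrow> smooth_on UNIV F"
  unfolding smooth_on_def smooth_def by simp

context carn
begin

lemma expX_nth: "expX j s $ j = s" by (simp add: expX_def)

lemma expX_mul: "gmul (expX j a) (expX j b) = expX j (a + b)"
  unfolding expX_def by (rule oneparam)

lemma expX_0[simp]: "expX j 0 = 0" by (simp add: expX_def)

lemma expX_cancel: "gmul (expX j (- a)) (gmul (expX j a) y) = y"
  by (simp add: expX_mul flip: assoc)

lemma expX_neg: "- expX j s = expX j (- s)" by (simp add: expX_def)

lemma smooth_expX_coord: "smooth (\<lambda>x. expX j (- (x $ j)))"
  unfolding expX_def by (intro smooth_scaleR smooth_minus smooth_vec_nth smooth_id smooth_const)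

lemma Pr_eq:
  assumes j: "deg j = 1"
  shows "Pr gmul j x = gmul x (expX j (- (x $ j)))"
  unfolding Pr_def
proof (rule the_equality)
  let ?p = "gmul x (expX j (- (x $ j)))"
  show "?p \<in> Pi_hyp 0 j \<and> x = gmul ?p (expX j (x $ j))"
    by (simp add: Pi_hyp_def coord_add[OF j] expX_nth assoc expX_mul)
  fix p assume "p \<in> Pi_hyp 0 j \<and> x = gmul p (expX j (x $ j))"
  then have h: "x = gmul p (expX j (x $ j))" by blast
  define t where "t = x $ j"
  have "gmul x (expX j (- t)) = gmul (gmul p (expX j t)) (expX j (- t))"
    using h unfolding t_def by simp
  also have "\<dots> = p" by (simp add: assoc expX_mul)
  finally show "p = ?p" unfolding t_def by simp
qed

lemma Pr_fun: "deg j = 1 \<Longrightarrow> Pr gmul j = (\<lambda>x. gmul x (expX j (- (x $ j))))"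
  using Pr_eq by (simp add: fun_eq_iff)

lemma smooth_Pr: "deg j = 1 \<Longrightarrow> smooth (Pr gmul j)"
  unfolding Pr_fun by (intro smooth_gmul smooth_id smooth_expX_coord)

lemma hyp_I:
  assumes "smooth F" "smooth G"
    and "\<And>x. x \<in> S \<Longrightarrow> F x \<in> T \<and> G (F x) = x"
    and "\<And>y. y \<in> T \<Longrightarrow> G y \<in> S \<and> F (G y) = y"
    and "\<And>x i k. x \<in> S \<Longrightarrow> i \<noteq> j \<Longrightarrow> k \<noteq> j \<Longrightarrow> deg k \<le> deg i \<Longrightarrow>
            DD F x (axis i 1) $ k = (if k = i then 1 else 0)"
  shows "hyp_diffeo_jac1 j S T F"
  unfolding hyp_diffeo_jac1_def
proof (intro conjI)
  show "bij_betw F S T"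
    by (rule bij_betw_byWitness[where f'=G]) (use assms(3,4) in auto)
  show "smooth_near S F" unfolding smooth_near_def using smooth_on_UNIV[OF assms(1)] by blast
  show "\<exists>G. smooth_near T G \<and> (\<forall>y\<in>T. G y \<in> S \<and> F (G y) = y) \<and> (\<forall>x\<in>S. G (F x) = x)"
    using smooth_on_UNIV[OF assms(2)] assms(3,4) unfolding smooth_near_def by blast
  show "\<forall>x\<in>S. det_on {k. k \<noteq> j} (\<lambda>k i. DD F x (axis i 1) $ k) = 1"
    using assms(5) by (auto intro!: det_unip[where deg=deg])
qed

lemma hyp_L:
  assumes j: "deg j = 1"
  shows "hyp_diffeo_jac1 j (Pi_hyp s j) (Pi_hyp 0 j) (\<lambda>x. gmul (expX j (- s)) x)"
proof (rule hyp_I[where G = "\<lambda>y. gmul (expX j s) y"])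
  show "smooth (gmul (expX j (- s)))" "smooth (gmul (expX j s))" by (rule smooth_gmul_left)+
  show "gmul (expX j (- s)) x \<in> Pi_hyp 0 j \<and> gmul (expX j s) (gmul (expX j (- s)) x) = x"
    if "x \<in> Pi_hyp s j" for x
    using that by (simp add: Pi_hyp_def coord_add[OF j] expX_nth flip: assoc) (simp add: expX_mul)
  show "gmul (expX j s) y \<in> Pi_hyp s j \<and> gmul (expX j (- s)) (gmul (expX j s) y) = y"
    if "y \<in> Pi_hyp 0 j" for y
    using that by (simp add: Pi_hyp_def coord_add[OF j] expX_nth flip: assoc) (simp add: expX_mul)
  fix x i k assume "deg k \<le> deg i"
  then show "DD (gmul (expX j (- s))) x (axis i 1) $ k = (if k = i then 1 else 0)"
    using unip_Dr unfolding unip_def Dr_def by blast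
qed

lemma hyp_R:
  assumes j: "deg j = 1"
  shows "hyp_diffeo_jac1 j (Pi_hyp s j) (Pi_hyp 0 j) (\<lambda>x. gmul x (expX j (- s)))"
proof (rule hyp_I[where G = "\<lambda>y. gmul y (expX j s)"])
  show "smooth (\<lambda>x. gmul x (expX j (- s)))" "smooth (\<lambda>y. gmul y (expX j s))" by (rule smooth_gmul_right)+
  show "gmul x (expX j (- s)) \<in> Pi_hyp 0 j \<and> gmul (gmul x (expX j (- s))) (expX j s) = x"
    if "x \<in> Pi_hyp s j" for x
    using that by (simp add: Pi_hyp_def coord_add[OF j] expX_nth assoc expX_mul)
  show "gmul y (expX j s) \<in> Pi_hyp s j \<and> gmul (gmul y (expX j s)) (expX j (- s)) = y"
    if "y \<in> Pi_hyp 0 j" for y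
    using that by (simp add: Pi_hyp_def coord_add[OF j] expX_nth assoc expX_mul)
  fix x i k assume "deg k \<le> deg i"
  then show "DD (\<lambda>x. gmul x (expX j (- s))) x (axis i 1) $ k = (if k = i then 1 else 0)"
    using unip_Dl unfolding unip_def Dl_def by blast
qed

lemma DD_Pr_axis:
  assumes j: "deg j = 1" and i: "i \<noteq> j"
  shows "DD (Pr gmul j) x (axis i 1) = Dl x (expX j (- (x $ j))) (axis i 1)"
proof -
  have "DD (\<lambda>x. gmul x (expX j (- (x $ j)))) x (axis i 1)
      = Dl x (expX j (- (x $ j))) (DD (\<lambda>x. x) x (axis i 1)) + Dr x (expX j (- (x $ j))) (DD (\<lambda>x. expX j (- (x $ j))) x (axis i 1))"
    by (rule DD_gmul[OF smooth_id smooth_expX_coord])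
  moreover have "DD (\<lambda>x. expX j (- (x $ j))) x (axis i 1) = 0"
  proof -
    have "DD (\<lambda>x. (- (x $ j)) *\<^sub>R axis j 1) x (axis i 1) = (- (x $ j)) *\<^sub>R DD (\<lambda>x. axis j 1) x (axis i 1) + DD (\<lambda>x. - (x $ j)) x (axis i 1) *\<^sub>R axis j 1"
      by (rule DD_scaleR) (intro smooth_minus smooth_vec_nth smooth_id smooth_const)+
    also have "\<dots> = 0"
      using i by (simp add: DD_const DD_minus[OF smooth_vec_nth[OF smooth_id]] DD_nth[OF smooth_id] DD_id axis_nth_if)
    finally show ?thesis by (simp add: expX_def)
  qed
  ultimately show ?thesis unfolding Pr_fun[OF j] by (simp add: DD_id)
qed

lemma hyp_Pr:
  assumes j: "deg j = 1"
  shows "hyp_diffeo_jac1 j (Pi_hyp s j) (Pi_hyp 0 j) (Pr gmul j)"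
proof (rule hyp_I[where G = "\<lambda>y. gmul y (expX j s)"])
  show "smooth (Pr gmul j)" by (rule smooth_Pr[OF j])
  show "smooth (\<lambda>y. gmul y (expX j s))" by (rule smooth_gmul_right)
  show "Pr gmul j x \<in> Pi_hyp 0 j \<and> gmul (Pr gmul j x) (expX j s) = x"
    if "x \<in> Pi_hyp s j" for x
    using that by (simp add: Pr_eq[OF j] Pi_hyp_def coord_add[OF j] expX_nth assoc expX_mul)
  show "gmul y (expX j s) \<in> Pi_hyp s j \<and> Pr gmul j (gmul y (expX j s)) = y"
    if "y \<in> Pi_hyp 0 j" for y
    using that by (simp add: Pr_eq[OF j] Pi_hyp_def coord_add[OF j] expX_nth assoc expX_mul)
  fix x i k assume "deg k \<le> deg i" "i \<noteq> j"
  then show "DD (Pr gmul j) x (axis i 1) $ k = (if k = i then 1 else 0)"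
    using unip_Dl DD_Pr_axis[OF j] unfolding unip_def by metis
qed

lemma XX_eq: "XX gmul i x = A x (axis i 1)"
  unfolding XX_def lvf_eq ..

lemma DD_curve: "DD (\<lambda>t::real. gmul x (t *\<^sub>R c)) 0 1 = A x c"
proof -
  have "DD (\<lambda>t::real. gmul x (t *\<^sub>R c)) 0 1 = Dr x (0 *\<^sub>R c) (DD (\<lambda>t::real. t *\<^sub>R c) 0 1)"
    by (rule DD_gmul_left[OF smooth_hv])
  also have "DD (\<lambda>t::real. t *\<^sub>R c) 0 1 = c"
    using DD_scaleR[OF smooth_id smooth_const, where x=0 and w=1] by (simp add: DD_id DD_const)
  finally show ?thesis by (simp add: A_def)
qed

lemma DD_Pr_along:
  assumes j: "deg j = 1"
  shows "DD (Pr gmul j) x (A x c) = DD (\<lambda>t::real. Pr gmul j (gmul x (t *\<^sub>R c))) 0 1"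
proof -
  have "DD (\<lambda>t::real. Pr gmul j (gmul x (t *\<^sub>R c))) 0 1 = DD (Pr gmul j) (gmul x (0 *\<^sub>R c)) (DD (\<lambda>t::real. gmul x (t *\<^sub>R c)) 0 1)"
    by (rule DD_comp[OF smooth_Pr[OF j] smooth_gmul[OF smooth_const smooth_hv]])
  then show ?thesis by (simp add: DD_curve)
qed

lemma part2:
  assumes j: "deg j = 1"
  shows "Pr gmul j differentiable (at x) \<and>
             frechet_derivative (Pr gmul j) (at x) (XX gmul j x) = 0 \<and>
             (\<exists>T. (\<forall>i. i \<noteq> j \<longrightarrow>
                     frechet_derivative (Pr gmul j) (at x) (XX gmul i x)
                       = (\<Sum>k\<in>{k. k \<noteq> j}. T k i *\<^sub>R XX gmul k (Pr gmul j x))) \<and>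
                  det_on {k. k \<noteq> j} T = 1)"
proof (intro conjI)
  show "Pr gmul j differentiable (at x)"
    using smooth_deriv[OF smooth_Pr[OF j]] unfolding differentiable_def by blast
  have const: "Pr gmul j (gmul x (t *\<^sub>R axis j 1)) = Pr gmul j x" for t
    by (simp add: Pr_eq[OF j] coord_add[OF j] assoc flip: expX_def) (simp add: expX_mul expX_nth)
  show "DD (Pr gmul j) x (XX gmul j x) = 0"
    unfolding XX_eq DD_Pr_along[OF j] const by (rule DD_const)
  define g where "g = expX j (x $ j)"
  define T where "T = (\<lambda>k i. Ad g (axis i 1) $ k)"
  show "\<exists>T. (\<forall>i. i \<noteq> j \<longrightarrow>
                     DD (Pr gmul j) x (XX gmul i x)
                       = (\<Sum>k\<in>{k. k \<noteq> j}. T k i *\<^sub>R XX gmul k (Pr gmul j x))) \<and>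
                  det_on {k. k \<noteq> j} T = 1"
  proof (intro exI[of _ T] conjI allI impI)
    show "det_on {k. k \<noteq> j} T = 1"
      unfolding T_def by (rule det_unip[where deg=deg]) (use unip_Ad in \<open>auto simp: unip_def\<close>)
    fix i assume i: "i \<noteq> j"
    have f: "Pr gmul j (gmul x (t *\<^sub>R axis i 1)) = gmul (Pr gmul j x) (gmul (gmul g (t *\<^sub>R axis i 1)) (- g))" for t
      using i by (simp add: Pr_eq[OF j] coord_add[OF j] assoc axis_nth_if g_def expX_neg expX_cancel)
    have "DD (Pr gmul j) x (XX gmul i x) = DD (\<lambda>t::real. gmul (Pr gmul j x) (gmul (gmul g (t *\<^sub>R axis i 1)) (- g))) 0 1"
      unfolding XX_eq DD_Pr_along[OF j] f ..
    also have "\<dots> = Dr (Pr gmul j x) (gmul (gmul g (0 *\<^sub>R axis i 1)) (- g)) (DD (\<lambda>t::real. gmul (gmul g (t *\<^sub>R axis i 1)) (- g)) 0 1)"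
      by (rule DD_gmul_left) (intro smooth_gmul smooth_const smooth_hv)
    also have "DD (\<lambda>t::real. gmul (gmul g (t *\<^sub>R axis i 1)) (- g)) 0 1 = DD (\<lambda>y. gmul (gmul g y) (- g)) (0 *\<^sub>R axis i 1) (DD (\<lambda>t::real. t *\<^sub>R axis i 1) 0 1)"
      by (rule DD_comp[OF smooth_conj smooth_hv])
    also have "\<dots> = Ad g (axis i 1)"
      by (simp add: DD_ray Ad_def)
    finally have e: "DD (Pr gmul j) x (XX gmul i x) = A (Pr gmul j x) (Ad g (axis i 1))"
      by (simp add: A_def)
    have Tj: "T j i = 0" unfolding T_def using unip_Ad[of g] i deg1_min[OF j, of i] unfolding unip_def by auto
    have "A (Pr gmul j x) (Ad g (axis i 1)) = (\<Sum>k\<in>UNIV. T k i *\<^sub>R A (Pr gmul j x) (axis k 1))"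
      unfolding T_def by (rule F_expand[where F = A, OF linear_A smooth_A])
    also have "\<dots> = (\<Sum>k\<in>{k. k \<noteq> j}. T k i *\<^sub>R A (Pr gmul j x) (axis k 1))"
    proof -
      have u: "UNIV - {j} = {k. k \<noteq> j}" by auto
      have "(\<Sum>k\<in>UNIV. T k i *\<^sub>R A (Pr gmul j x) (axis k 1)) = T j i *\<^sub>R A (Pr gmul j x) (axis j 1) + (\<Sum>k\<in>UNIV - {j}. T k i *\<^sub>R A (Pr gmul j x) (axis k 1))"
        by (rule sum.remove) auto
      then have "(\<Sum>k\<in>UNIV. T k i *\<^sub>R A (Pr gmul j x) (axis k 1)) = T j i *\<^sub>R A (Pr gmul j x) (axis j 1) + (\<Sum>k\<in>{k. k \<noteq> j}. T k i *\<^sub>R A (Pr gmul j x) (axis k 1))"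
        unfolding u .
      then show ?thesis using Tj by simp
    qed
    finally show "DD (Pr gmul j) x (XX gmul i x) = (\<Sum>k\<in>{k. k \<noteq> j}. T k i *\<^sub>R XX gmul k (Pr gmul j x))"
      using e by (simp add: XX_eq)
  qed
qed

end

theorem mainTheorem14:
  fixes gmul :: "real^'n::finite \<Rightarrow> real^'n \<Rightarrow> real^'n"
    and deg :: "'n \<Rightarrow> nat" and m :: nat and j :: 'n
  assumes "carnot gmul deg m"
    and "deg j = 1"
  shows "(\<forall>s::real.
            hyp_diffeo_jac1 j (Pi_hyp s j) (Pi_hyp 0 j) (\<lambda>x. gmul (expX j (- s)) x) \<and>
            hyp_diffeo_jac1 j (Pi_hyp s j) (Pi_hyp 0 j) (\<lambda>x. gmul x (expX j (- s))) \<and>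
            hyp_diffeo_jac1 j (Pi_hyp s j) (Pi_hyp 0 j) (Pr gmul j))
      \<and> (\<forall>x. Pr gmul j differentiable (at x) \<and>
             frechet_derivative (Pr gmul j) (at x) (XX gmul j x) = 0 \<and>
             (\<exists>T. (\<forall>i. i \<noteq> j \<longrightarrow>
                     frechet_derivative (Pr gmul j) (at x) (XX gmul i x)
                       = (\<Sum>k\<in>{k. k \<noteq> j}. T k i *\<^sub>R XX gmul k (Pr gmul j x))) \<and>
                  det_on {k. k \<noteq> j} T = 1))"
proof -
  interpret carn gmul deg m by (unfold_locales) (rule assms(1))
  have H1: "\<forall>s::real.
            hyp_diffeo_jac1 j (Pi_hyp s j) (Pi_hyp 0 j) (\<lambda>x. gmul (expX j (- s)) x) \<and>
            hyp_diffeo_jac1 j (Pi_hyp s j) (Pi_hyp 0 j) (\<lambda>x. gmul x (expX j (- s))) \<and>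
            hyp_diffeo_jac1 j (Pi_hyp s j) (Pi_hyp 0 j) (Pr gmul j)"
    using hyp_L[OF assms(2)] hyp_R[OF assms(2)] hyp_Pr[OF assms(2)] by blast
  have H2: "\<forall>x. Pr gmul j differentiable (at x) \<and>
             frechet_derivative (Pr gmul j) (at x) (XX gmul j x) = 0 \<and>
             (\<exists>T. (\<forall>i. i \<noteq> j \<longrightarrow>
                     frechet_derivative (Pr gmul j) (at x) (XX gmul i x)
                       = (\<Sum>k\<in>{k. k \<noteq> j}. T k i *\<^sub>R XX gmul k (Pr gmul j x))) \<and>
                  det_on {k. k \<noteq> j} T = 1)"
    using part2[OF assms(2)] by blast
  show ?thesis by (rule conjI[OF H1 H2])
qed


end
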